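(* Let $p\in\mathbb{N}$ and let $f$ be analytic and $p$-symmetric in the unit disk $\mathbb{D}=\{z\in\mathbb{C}:|z|<1\}$, i.e. $f(z)=z\sum_{k=0}^{\infty}a_{pk+1}z^{pk}$, with $|f(z)|\le 1$ for all $z\in\mathbb{D}$. Then $$M_f(r)=\sum_{k=0}^{\infty}|a_{pk+1}|r^{pk+1}\le 1\quad\text{for all } 0\le r\le r_p,$$ where $r_p$ is the maximal positive root in $(0,1)$ of the equation $$-6r^{p-1}+r^{2(p-1)}+8r^{2p}+1=0.$$ Moreover, the radius $r_p$ is attained by the extremal function $f(z)=z(z^p-a)/(1-az^p)$ with $$a=\left(1-\frac{\sqrt{1-r_p^{2p}}}{\sqrt{2}}\right)\frac{1}{r_p^{p}},$$ in the sense that the largest $r$ for which $M_f(r)\le 1$ holds for this function equals $r_p$.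
   Context: For $f(z)=\sum_{n\ge0}a_nz^n$ analytic in $\mathbb{D}$, $M_f(r)=\sum_{n\ge 0}|a_n|r^n$ (the majorant series). A function $f$ analytic in $\mathbb{D}$ is called $p$-symmetric if it has the form $f(z)=z\sum_{k=0}^\infty a_{pk+1}z^{pk}$. *)

theory Defs
  imports "HOL-Analysis.Analysis"
begin

definition majorant :: "(nat \<Rightarrow> complex) \<Rightarrow> real \<Rightarrow> real" where
  "majorant a r = (\<Sum>n. norm (a n) * r ^ n)"

definition p_symmetric_coeffs :: "nat \<Rightarrow> (nat \<Rightarrow> complex) \<Rightarrow> bool" where
  "p_symmetric_coeffs p a \<longleftrightarrow> (\<forall>n. a n \<noteq> 0 \<longrightarrow> (\<exists>k. n = p * k + 1))"

definition bohr_poly :: "nat \<Rightarrow> real \<Rightarrow> real" where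
  "bohr_poly p r = - 6 * r ^ (p - 1) + r ^ (2 * (p - 1)) + 8 * r ^ (2 * p) + 1"

definition bohr_radius :: "nat \<Rightarrow> real" where
  "bohr_radius p = (GREATEST r. 0 < r \<and> r < 1 \<and> bohr_poly p r = 0)"

end

theory Submission
  imports Defs "HOL-Complex_Analysis.Complex_Analysis"
begin

lemma R1:
  fixes A x r y :: real
  assumes "0 \<le> A" "A \<le> 1" "0 < x" "x < 1" "0 < r" "x = r * y"
    and poly: "- 6 * y + y^2 + 8 * x^2 + 1 = 0"
  shows "r * (A + x * (1 - A^2) / (1 - A * x)) \<le> 1"
proof -
  define t where "t = 1 - A * x"
  have "A * x \<le> 1 * x" using assms by (intro mult_right_mono) auto
  then have tpos: "t > 0" unfolding t_def using assms(4) by linarith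
  have key: "2 * t^2 - (3 - y) * t + (1 - x^2) \<ge> 0"
  proof -
    have "8 * (1 - x^2) = (3 - y)^2" using poly by (simp add: power2_eq_square algebra_simps)
    then have h: "1 - x^2 = (3 - y)^2 / 8" by simp
    have "2 * t^2 - (3 - y) * t + (1 - x^2) = 2 * (t - (3 - y)/4)^2"
      unfolding h by (simp add: power2_eq_square field_simps)
    then show ?thesis by simp
  qed
  have "r * (A * t + x * (1 - A^2)) \<le> t"
  proof -
    have "x * (r * (A * t + x * (1 - A^2))) = r * (3 * t - 2 * t^2 - (1 - x^2))"
      unfolding t_def by (simp add: power2_eq_square algebra_simps)
    also have "\<dots> \<le> r * (y * t)" using key \<open>r > 0\<close>
      by (intro mult_left_mono) (auto simp: algebra_simps)
    also have "\<dots> = x * t" using assms by simp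
    finally show ?thesis using \<open>x > 0\<close> by (simp add: mult_le_cancel_left)
  qed
  then show ?thesis using tpos unfolding t_def[symmetric]
    by (simp add: field_simps)
qed

lemma R2:
  fixes A x :: real
  assumes "0 \<le> A" "A \<le> x" "x^2 \<le> 1/2"
  shows "A + x * sqrt (1 - A^2) / sqrt (1 - x^2) \<le> 2 * x"
proof -
  define s where "s = sqrt (1 - A^2)"
  define c where "c = sqrt (1 - x^2)"
  have A2: "A^2 \<le> x^2" using assms by (simp add: power_mono)
  have s2: "s^2 = 1 - A^2" unfolding s_def using A2 assms by (intro real_sqrt_pow2) linarith
  have c2: "c^2 = 1 - x^2" unfolding c_def using assms by (intro real_sqrt_pow2) linarith
  have le1: "A^2 \<le> 1" "x^2 \<le> 1" using A2 assms by linarith+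
  have s0: "s \<ge> 0" "c \<ge> 0" unfolding s_def c_def using le1 by auto
  have "x^2 \<le> c^2" using c2 assms(3) by linarith
  then have cx: "c \<ge> x" by (rule power2_le_imp_le) (use s0 in simp)
  have "c^2 \<le> s^2" using s2 c2 A2 by linarith
  then have sc: "s \<ge> c" by (rule power2_le_imp_le) (use s0 in simp)
  have cpos: "c > 0"
  proof (rule ccontr)
    assume "\<not> c > 0" then have "c = 0" using s0 by simp
    then show False using c2 assms by simp
  qed
  have "A * c + x * s \<le> 2 * x * c"
  proof -
    have fac: "(s - c) * (s + c) = (x - A) * (x + A)" using s2 c2 by (simp add: power2_eq_square algebra_simps)
    have m: "c * (s + c) \<ge> x * (x + A)"
      using cx sc assms s0 by (intro mult_mono) auto
    have "x * (s - c) * (s + c) = x * ((x - A) * (x + A))" by (simp only: mult.assoc fac)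
    also have "\<dots> = (x * (x + A)) * (x - A)" by (simp only: mult_ac)
    also have "\<dots> \<le> (c * (s + c)) * (x - A)" using m assms by (intro mult_right_mono) auto
    also have "\<dots> = c * (x - A) * (s + c)" by (simp add: algebra_simps)
    finally have "x * (s - c) * (s + c) \<le> c * (x - A) * (s + c)" .
    then have "x * (s - c) \<le> c * (x - A)" using s0 cpos
      by (simp add: mult_le_cancel_right)
    then show ?thesis by (simp add: algebra_simps)
  qed
  then show ?thesis using cpos unfolding s_def[symmetric] c_def[symmetric]
    by (simp add: field_simps)
qed

lemma root_unity_sum:
  assumes n: "n > 0" and m: "\<bar>m\<bar> < int n"
  shows "(\<Sum>j<n. exp (2 * pi * \<i> * of_int m * of_nat j / of_nat n)) = (if m = 0 then of_nat n else 0)"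
proof (cases "m = 0")
  case True then show ?thesis by simp
next
  case False
  define d where "d = exp (2 * pi * \<i> * of_int m / of_nat n)"
  have eq: "exp (2 * pi * \<i> * of_int m * of_nat j / of_nat n) = d ^ j" for j :: nat
  proof -
    have arg: "2 * pi * \<i> * of_int m * of_nat j / of_nat n = of_nat j * (2 * pi * \<i> * of_int m / of_nat n)"
      by simp
    show ?thesis by (simp only: arg exp_of_nat_mult d_def)
  qed
  have dn: "d ^ n = 1"
  proof -
    have nz: "(of_nat n :: complex) \<noteq> 0" using n by simp
    have arg: "of_nat n * (2 * pi * \<i> * of_int m / of_nat n) = 2 * of_int m * pi * \<i>"
      using nz by (simp add: field_simps)
    have "d ^ n = exp (of_nat n * (2 * pi * \<i> * of_int m / of_nat n))"
      unfolding d_def by (simp only: exp_of_nat_mult)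
    also have "\<dots> = exp (2 * of_int m * pi * \<i>)" by (simp only: arg)
    also have "\<dots> = 1" by (rule exp_integer_2pi) simp
    finally show ?thesis .
  qed
  have d1: "d \<noteq> 1"
  proof
    assume "d = 1"
    then obtain k :: int where k: "Im (2 * pi * \<i> * of_int m / of_nat n) = of_int (2 * k) * pi"
      unfolding d_def exp_eq_1 by blast
    have "2 * pi * of_int m / of_nat n = of_int (2 * k) * pi" using k by simp
    then have "real_of_int m = of_int k * of_nat n" using n by (simp add: field_simps)
    then have mk: "m = k * int n" by (metis of_int_eq_iff of_int_mult of_int_of_nat_eq)
    show False
    proof (cases "k = 0")
      case True then show False using mk False by simp
    next
      case False
      then have "1 \<le> \<bar>k\<bar>" by linarith
      then have "1 * int n \<le> \<bar>k\<bar> * int n" by (intro mult_right_mono) auto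
      then have "\<bar>m\<bar> \<ge> int n" using mk by (simp add: abs_mult)
      then show False using m by simp
    qed
  qed
  have "(\<Sum>j<n. exp (2 * pi * \<i> * of_int m * of_nat j / of_nat n)) = (\<Sum>j<n. d ^ j)"
    using eq by simp
  also have "\<dots> = 0" using d1 dn by (simp add: sum_gp_strict)
  finally show ?thesis using False by simp
qed

lemma parseval_disc:
  fixes c :: "nat \<Rightarrow> complex" and \<rho> :: real
  assumes n: "n > 0"
  shows "(\<Sum>j<n. (cmod (\<Sum>k<n. c k * (complex_of_real \<rho> * exp (2 * pi * \<i> * of_nat j / of_nat n)) ^ k))^2)
         = of_nat n * (\<Sum>k<n. (cmod (c k))^2 * \<rho>^(2*k))"
proof -
  define W where "W = (\<lambda>j k::nat. exp (2 * pi * \<i> * of_nat k * of_nat j / of_nat n))"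
  have pw: "(complex_of_real \<rho> * exp (2 * pi * \<i> * of_nat j / of_nat n)) ^ k = of_real (\<rho>^k) * W j k" for j k
  proof -
    have arg: "2 * pi * \<i> * of_nat k * of_nat j / of_nat n = of_nat k * (2 * pi * \<i> * of_nat j / of_nat n)"
      by simp
    show ?thesis unfolding W_def by (simp only: arg exp_of_nat_mult power_mult_distrib of_real_power)
  qed
  have WW: "W j k * cnj (W j l) = exp (2 * pi * \<i> * of_int (int k - int l) * of_nat j / of_nat n)" for j k l
  proof -
    have cW: "cnj (W j l) = exp (- (2 * pi * \<i> * of_nat l * of_nat j / of_nat n))"
      unfolding W_def by (simp add: exp_cnj)
    have arg: "2 * pi * \<i> * of_nat k * of_nat j / of_nat n + - (2 * pi * \<i> * of_nat l * of_nat j / of_nat n)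
       = 2 * pi * \<i> * of_int (int k - int l) * of_nat j / (of_nat n :: complex)"
      by (simp add: diff_divide_distrib algebra_simps)
    have "W j k * cnj (W j l) = exp (2 * pi * \<i> * of_nat k * of_nat j / of_nat n + - (2 * pi * \<i> * of_nat l * of_nat j / of_nat n))"
      using cW unfolding W_def by (simp only: exp_add)
    also have "\<dots> = exp (2 * pi * \<i> * of_int (int k - int l) * of_nat j / of_nat n)" by (simp only: arg)
    finally show ?thesis .
  qed
  have inner: "(\<Sum>j<n. W j k * cnj (W j l)) = (if k = l then of_nat n else 0)" if "k < n" "l < n" for k l
  proof -
    have "\<bar>int k - int l\<bar> < int n" using that by simp
    then show ?thesis unfolding WW using root_unity_sum[OF n, of "int k - int l"] by simp
  qed
  have "complex_of_real (\<Sum>j<n. (cmod (\<Sum>k<n. c k * (complex_of_real \<rho> * exp (2 * pi * \<i> * of_nat j / of_nat n)) ^ k))^2)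
      = (\<Sum>j<n. complex_of_real ((cmod (\<Sum>k<n. c k * (of_real (\<rho>^k) * W j k)))^2))"
    by (simp only: pw of_real_sum)
  also have "\<dots> = (\<Sum>j<n. (\<Sum>k<n. c k * (of_real (\<rho>^k) * W j k)) * cnj (\<Sum>l<n. c l * (of_real (\<rho>^l) * W j l)))"
    by (simp only: complex_norm_square)
  also have "\<dots> = (\<Sum>j<n. \<Sum>k<n. \<Sum>l<n. (c k * cnj (c l) * of_real (\<rho>^k * \<rho>^l)) * (W j k * cnj (W j l)))"
    by (simp add: sum_product cnj_sum mult_ac)
  also have "\<dots> = (\<Sum>k<n. \<Sum>l<n. (c k * cnj (c l) * of_real (\<rho>^k * \<rho>^l)) * (\<Sum>j<n. W j k * cnj (W j l)))"
    (is "?L = ?R")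
  proof -
    have "?L = (\<Sum>k<n. \<Sum>j<n. \<Sum>l<n. (c k * cnj (c l) * of_real (\<rho>^k * \<rho>^l)) * (W j k * cnj (W j l)))"
      by (rule sum.swap)
    also have "\<dots> = (\<Sum>k<n. \<Sum>l<n. \<Sum>j<n. (c k * cnj (c l) * of_real (\<rho>^k * \<rho>^l)) * (W j k * cnj (W j l)))"
      by (rule sum.cong[OF refl], rule sum.swap)
    also have "\<dots> = ?R" by (simp only: sum_distrib_left)
    finally show ?thesis .
  qed
  also have "\<dots> = (\<Sum>k<n. (c k * cnj (c k) * of_real (\<rho>^k * \<rho>^k)) * of_nat n)"
    by (simp add: inner if_distrib cong: if_cong)
  also have "\<dots> = (\<Sum>k<n. of_real ((cmod (c k))^2 * \<rho>^(2*k)) * of_nat n)"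
  proof (rule sum.cong[OF refl])
    fix k
    have e: "c k * cnj (c k) = of_real ((cmod (c k))^2)" by (rule complex_norm_square[symmetric])
    have r: "\<rho>^k * \<rho>^k = \<rho>^(2*k)" by (simp add: power_add[symmetric] mult_2)
    show "c k * cnj (c k) * of_real (\<rho>^k * \<rho>^k) * of_nat n = of_real ((cmod (c k))^2 * \<rho>^(2*k)) * of_nat n"
      by (simp only: e r of_real_mult)
  qed
  also have "\<dots> = complex_of_real (of_nat n * (\<Sum>k<n. (cmod (c k))^2 * \<rho>^(2*k)))"
    by (simp add: sum_distrib_left mult_ac)
  finally show ?thesis by (simp only: of_real_eq_iff)
qed

lemma term_le_suminf:
  fixes g :: "nat \<Rightarrow> real"
  assumes "summable g" "\<And>k. 0 \<le> g k"
  shows "g n \<le> suminf g"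
  using sum_le_suminf[OF assms(1), of "{n}"] assms(2) by simp

lemma sq_summable:
  fixes e :: "nat \<Rightarrow> complex" and \<rho> :: real
  assumes "0 \<le> \<rho>" "summable (\<lambda>k. cmod (e k) * \<rho>^k)"
  shows "summable (\<lambda>k. (cmod (e k))^2 * \<rho>^(2*k))"
proof -
  define u where "u = (\<lambda>k. cmod (e k) * \<rho>^k)"
  have u0: "\<And>k. 0 \<le> u k" unfolding u_def using assms by simp
  have uK: "u k \<le> suminf u" for k using term_le_suminf[of u k] assms u0 unfolding u_def by simp
  have "summable (\<lambda>k. suminf u * u k)" using assms unfolding u_def by (intro summable_mult) simp
  moreover have "norm ((cmod (e k))^2 * \<rho>^(2*k)) \<le> suminf u * u k" for k
  proof -
    have "(cmod (e k))^2 * \<rho>^(2*k) = u k * u k" unfolding u_def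
      by (simp add: power_mult power2_eq_square mult_ac)
    moreover have "u k * u k \<le> suminf u * u k" using uK u0 by (simp add: mult_right_mono)
    ultimately show ?thesis using u0 by (simp add: abs_mult)
  qed
  ultimately show ?thesis by (rule summable_comparison_test') 
qed

lemma tail_bound:
  fixes e :: "nat \<Rightarrow> complex" and \<rho> :: real and w :: complex
  assumes se: "summable (\<lambda>k. cmod (e k) * \<rho>^k)" and w: "cmod w \<le> \<rho>"
  shows "cmod ((\<Sum>k. e k * w^k) - (\<Sum>k<n. e k * w^k)) \<le> (\<Sum>k. cmod (e k) * \<rho>^k) - (\<Sum>k<n. cmod (e k) * \<rho>^k)"
proof -
  have bnd: "norm (e k * w^k) \<le> cmod (e k) * \<rho>^k" for k
    using w by (simp add: norm_mult norm_power mult_left_mono power_mono)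
  have sew: "summable (\<lambda>k. e k * w^k)"
    by (rule summable_comparison_test'[OF se]) (use bnd in auto)
  have "(\<Sum>k. e k * w^k) - (\<Sum>k<n. e k * w^k) = (\<Sum>k. e (k+n) * w^(k+n))"
    using suminf_split_initial_segment[OF sew, of n] by simp
  also have "cmod \<dots> \<le> (\<Sum>k. cmod (e (k+n)) * \<rho>^(k+n))"
    by (rule norm_suminf_le) (use bnd se in \<open>auto simp: summable_iff_shift[where f="\<lambda>k. cmod (e k) * \<rho>^k"]\<close>)
  also have "\<dots> = (\<Sum>k. cmod (e k) * \<rho>^k) - (\<Sum>k<n. cmod (e k) * \<rho>^k)"
    using suminf_split_initial_segment[OF se, of n] by simp
  finally show ?thesis .
qed

lemma bessel_dp:
  fixes e d :: "nat \<Rightarrow> complex" and \<rho> :: real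
  assumes \<rho>: "0 < \<rho>"
    and se: "summable (\<lambda>k. cmod (e k) * \<rho>^k)" and sd: "summable (\<lambda>k. cmod (d k) * \<rho>^k)"
    and le: "\<And>w. cmod w = \<rho> \<Longrightarrow> cmod (\<Sum>k. e k * w^k) \<le> cmod (\<Sum>k. d k * w^k)"
  shows "(\<Sum>k. (cmod (e k))^2 * \<rho>^(2*k)) \<le> (\<Sum>k. (cmod (d k))^2 * \<rho>^(2*k))"
proof -
  define ge where "ge = (\<lambda>k. cmod (e k) * \<rho>^k)"
  define gd where "gd = (\<lambda>k. cmod (d k) * \<rho>^k)"
  define \<eta> where "\<eta> = (\<lambda>n. (suminf ge - (\<Sum>k<n. ge k)) + (suminf gd - (\<Sum>k<n. gd k)))"
  define K where "K = suminf gd"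
  define SE where "SE = (\<lambda>n. \<Sum>k<n. (cmod (e k))^2 * \<rho>^(2*k))"
  define SD where "SD = (\<lambda>n. \<Sum>k<n. (cmod (d k))^2 * \<rho>^(2*k))"
  have ge0: "\<And>k. 0 \<le> ge k" and gd0: "\<And>k. 0 \<le> gd k" unfolding ge_def gd_def using \<rho> by auto
  have eta0: "0 \<le> \<eta> n" for n
    unfolding \<eta>_def using sum_le_suminf[of ge "{..<n}"] sum_le_suminf[of gd "{..<n}"] se sd ge0 gd0
    unfolding ge_def gd_def by auto
  have main: "SE n \<le> SD n + (2 * \<eta> n * K + (\<eta> n)^2)" if n: "n > 0" for n
  proof -
    define w where "w = (\<lambda>j::nat. complex_of_real \<rho> * exp (2 * pi * \<i> * of_nat j / of_nat n))"
    have nw: "cmod (w j) = \<rho>" for j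
    proof -
      have "cmod (exp (2 * pi * \<i> * of_nat j / of_nat n)) = 1"
        by (simp add: norm_exp_eq_Re)
      then show ?thesis unfolding w_def using \<rho> by (simp add: norm_mult)
    qed
    have pt: "(cmod (\<Sum>k<n. e k * w j ^ k))^2 \<le> (cmod (\<Sum>k<n. d k * w j ^ k))^2 + (2 * \<eta> n * K + (\<eta> n)^2)" for j
    proof -
      have nwj: "cmod (w j) \<le> \<rho>" using nw[of j] by simp
      have t1: "cmod ((\<Sum>k. e k * w j^k) - (\<Sum>k<n. e k * w j^k)) \<le> suminf ge - (\<Sum>k<n. ge k)"
        by (rule tail_bound[OF se nwj, unfolded ge_def[symmetric]])
      have t2: "cmod ((\<Sum>k. d k * w j^k) - (\<Sum>k<n. d k * w j^k)) \<le> suminf gd - (\<Sum>k<n. gd k)"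
        by (rule tail_bound[OF sd nwj, unfolded gd_def[symmetric]])
      have l: "cmod (\<Sum>k. e k * w j^k) \<le> cmod (\<Sum>k. d k * w j^k)" by (rule le) (rule nw)
      have i1: "cmod (\<Sum>k<n. e k * w j^k) - cmod (\<Sum>k. e k * w j^k) \<le> cmod ((\<Sum>k. e k * w j^k) - (\<Sum>k<n. e k * w j^k))"
        using norm_triangle_ineq2[of "\<Sum>k<n. e k * w j^k" "\<Sum>k. e k * w j^k"] by (simp only: norm_minus_commute)
      have i2: "cmod (\<Sum>k. d k * w j^k) - cmod (\<Sum>k<n. d k * w j^k) \<le> cmod ((\<Sum>k. d k * w j^k) - (\<Sum>k<n. d k * w j^k))"
        by (rule norm_triangle_ineq2)
      have a: "cmod (\<Sum>k<n. e k * w j ^ k) \<le> cmod (\<Sum>k<n. d k * w j ^ k) + \<eta> n"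
        using t1 t2 l i1 i2 unfolding \<eta>_def by linarith
      have b: "cmod (\<Sum>k<n. d k * w j ^ k) \<le> K"
      proof -
        have "cmod (\<Sum>k<n. d k * w j ^ k) \<le> (\<Sum>k<n. cmod (d k * w j ^ k))" by (rule norm_sum)
        also have "\<dots> = (\<Sum>k<n. gd k)" unfolding gd_def norm_mult norm_power nw ..
        also have "\<dots> \<le> K" unfolding K_def by (rule sum_le_suminf) (use sd gd0 in \<open>auto simp: gd_def\<close>)
        finally show ?thesis .
      qed
      define A where "A = cmod (\<Sum>k<n. e k * w j ^ k)"
      define B where "B = cmod (\<Sum>k<n. d k * w j ^ k)"
      have A0: "A \<ge> 0" unfolding A_def by (rule norm_ge_zero)
      have a': "A \<le> B + \<eta> n" using a unfolding A_def B_def .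
      have b': "B \<le> K" using b unfolding B_def .
      have e0: "\<eta> n \<ge> 0" by (rule eta0)
      have "A^2 \<le> (B + \<eta> n)^2" using a' A0 by (intro power_mono) auto
      also have "\<dots> = B^2 + 2 * \<eta> n * B + (\<eta> n)^2" by (simp add: power2_eq_square algebra_simps)
      also have "\<dots> \<le> B^2 + 2 * \<eta> n * K + (\<eta> n)^2" using b' e0 by (simp add: mult_left_mono)
      finally show ?thesis unfolding A_def B_def by (simp add: add.assoc)
    qed
    have "of_nat n * SE n = (\<Sum>j<n. (cmod (\<Sum>k<n. e k * w j ^ k))^2)"
      unfolding SE_def w_def using parseval_disc[OF n, of e \<rho>] by simp
    also have "\<dots> \<le> (\<Sum>j<n. (cmod (\<Sum>k<n. d k * w j ^ k))^2 + (2 * \<eta> n * K + (\<eta> n)^2))"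
      by (rule sum_mono) (rule pt)
    also have "\<dots> = of_nat n * SD n + of_nat n * (2 * \<eta> n * K + (\<eta> n)^2)"
      unfolding SD_def w_def using parseval_disc[OF n, of d \<rho>] by (simp add: sum.distrib)
    finally have "of_nat n * SE n \<le> of_nat n * (SD n + (2 * \<eta> n * K + (\<eta> n)^2))"
      by (simp add: algebra_simps)
    then show ?thesis using n by simp
  qed
  have sE: "summable (\<lambda>k. (cmod (e k))^2 * \<rho>^(2*k))" using sq_summable[of \<rho> e] se \<rho> by simp
  have sD: "summable (\<lambda>k. (cmod (d k))^2 * \<rho>^(2*k))" using sq_summable[of \<rho> d] sd \<rho> by simp
  have limE: "SE \<longlonglongrightarrow> (\<Sum>k. (cmod (e k))^2 * \<rho>^(2*k))" unfolding SE_def by (rule summable_LIMSEQ[OF sE])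
  have limeta: "\<eta> \<longlonglongrightarrow> 0"
  proof -
    have l1: "(\<lambda>n. \<Sum>k<n. ge k) \<longlonglongrightarrow> suminf ge" by (rule summable_LIMSEQ) (use se in \<open>simp add: ge_def\<close>)
    have l2: "(\<lambda>n. \<Sum>k<n. gd k) \<longlonglongrightarrow> suminf gd" by (rule summable_LIMSEQ) (use sd in \<open>simp add: gd_def\<close>)
    have "(\<lambda>n. (suminf ge - (\<Sum>k<n. ge k)) + (suminf gd - (\<Sum>k<n. gd k))) \<longlonglongrightarrow> (suminf ge - suminf ge) + (suminf gd - suminf gd)"
      by (intro tendsto_add tendsto_diff tendsto_const l1 l2)
    then show ?thesis unfolding \<eta>_def by simp
  qed
  have sdl: "SD \<longlonglongrightarrow> (\<Sum>k. (cmod (d k))^2 * \<rho>^(2*k))" unfolding SD_def by (rule summable_LIMSEQ[OF sD])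
  have limD: "(\<lambda>n. SD n + (2 * \<eta> n * K + (\<eta> n)^2)) \<longlonglongrightarrow> (\<Sum>k. (cmod (d k))^2 * \<rho>^(2*k)) + (2 * 0 * K + 0^2)"
    by (intro tendsto_add tendsto_mult tendsto_const tendsto_power sdl limeta)
  have "\<exists>N. \<forall>n\<ge>N. SE n \<le> SD n + (2 * \<eta> n * K + (\<eta> n)^2)"
    using main by (intro exI[of _ 1]) auto
  then show ?thesis
    using LIMSEQ_le[OF limE limD] by simp
qed

lemma poly_xy:
  assumes "p \<ge> 1"
  shows "bohr_poly p r = - 6 * r^(p-1) + (r^(p-1))^2 + 8 * (r^p)^2 + 1"
proof -
  have "r^(2*(p-1)) = (r^(p-1))^2" by (simp add: power_mult[symmetric] mult.commute)
  moreover have "r^(2*p) = (r^p)^2" by (simp add: power_mult[symmetric] mult.commute)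
  ultimately show ?thesis unfolding bohr_poly_def by simp
qed

lemma pow_split:
  fixes r :: real
  assumes "p \<ge> 1" shows "r^p = r * r^(p-1)"
  using assms by (metis Suc_diff_1 less_le_trans power_Suc zero_less_one)

lemma bohr_root:
  assumes p: "p \<ge> 1"
  shows "0 < bohr_radius p \<and> bohr_radius p < 1 \<and> bohr_poly p (bohr_radius p) = 0 \<and> bohr_radius p ^ p > 1/3"
proof -
  define P where "P = bohr_poly p"
  have contP: "continuous_on UNIV P" unfolding P_def bohr_poly_def by (intro continuous_intros)
  have P1: "P 1 = 4" unfolding P_def bohr_poly_def by simp
  obtain r0 where r0: "0 < r0" "r0 < 1" "P r0 < 0" and r0p: "p \<ge> 2 \<Longrightarrow> r0^(p-1) = 1/3"
  proof (cases "p = 1")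
    case True
    show ?thesis by (rule that[of "1/2"]) (use True in \<open>auto simp: P_def bohr_poly_def power2_eq_square\<close>)
  next
    case False
    then have p2: "p \<ge> 2" "p - 1 > 0" using p by auto
    define r0 where "r0 = root (p-1) (1/3)"
    have a: "0 < r0" "r0 < 1" unfolding r0_def using p2 by (auto intro: real_root_gt_zero)
    have b: "r0^(p-1) = 1/3" unfolding r0_def using p2 by simp
    have "P r0 = - 6 * (1/3) + (1/3)^2 + 8 * (r0 * (1/3))^2 + 1"
      unfolding P_def poly_xy[OF p] pow_split[OF p, of r0] b ..
    also have "\<dots> = 8/9 * (r0 * r0) - 8/9" by (simp add: power2_eq_square algebra_simps)
    also have "\<dots> < 0" using mult_strict_mono[of r0 1 r0 1] a by simp
    finally show ?thesis by (rule that[OF a]) (use b in auto)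
  qed
  obtain x1 where x1: "r0 \<le> x1" "x1 \<le> 1" "P x1 = 0"
    using IVT'[of P r0 0 1] r0 P1 continuous_on_subset[OF contP] by auto
  have x1': "r0 < x1" "x1 < 1" using x1 r0 P1 by (auto simp: order_le_less)
  define S where "S = {r. 0 < r \<and> r < 1 \<and> P r = 0}"
  have x1S: "x1 \<in> S" using x1' r0 x1 unfolding S_def by auto
  have bdd: "bdd_above S" unfolding S_def by (auto intro: bdd_aboveI[of _ 1])
  define s where "s = Sup S"
  have sx1: "x1 \<le> s" unfolding s_def using x1S bdd by (rule cSup_upper)
  have "s \<in> closure S" unfolding s_def using x1S bdd by (intro closure_contains_Sup) auto
  moreover have "closure S \<subseteq> {r. P r = 0} \<inter> {0..1}"
  proof (rule closure_minimal)
    show "S \<subseteq> {r. P r = 0} \<inter> {0..1}" unfolding S_def by auto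
    show "closed ({r. P r = 0} \<inter> {0..1})"
      by (intro closed_Int closed_Collect_eq contP continuous_on_const) auto
  qed
  ultimately have s: "P s = 0" "s \<le> 1" by auto
  have s1: "s < 1" using s P1 by (cases "s = 1") auto
  have sS: "s \<in> S" unfolding S_def using s s1 sx1 x1' r0 by auto
  have gr: "bohr_radius p = s"
    unfolding bohr_radius_def
  proof (rule Greatest_equality)
    show "0 < s \<and> s < 1 \<and> bohr_poly p s = 0" using sS unfolding S_def P_def by auto
    fix y assume "0 < y \<and> y < 1 \<and> bohr_poly p y = 0"
    then have "y \<in> S" unfolding S_def P_def by auto
    then show "y \<le> s" unfolding s_def using bdd by (rule cSup_upper)
  qed
  have s0: "0 < s" using sS unfolding S_def by auto
  have x3: "s^p > 1/3"
  proof (rule ccontr)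
    assume "\<not> s^p > 1/3"
    then have xs: "s^p \<le> 1/3" by simp
    define y where "y = s^(p-1)"
    define x where "x = s^p"
    have x0: "0 < x" unfolding x_def using s0 by simp
    have y1: "y \<le> 1" unfolding y_def using s0 s1 by (simp add: power_le_one)
    have eq: "- 6 * y + y^2 + 8 * x^2 + 1 = 0" using s(1) unfolding P_def poly_xy[OF p] x_def y_def .
    have "x^2 \<le> (1/3)^2" using xs x0 unfolding x_def[symmetric]
      by (intro power_mono) auto
    then have "x^2 \<le> 1/9" by (simp add: power2_eq_square)
    then have "(3 - y)^2 \<ge> 64/9" using eq by (simp add: power2_eq_square algebra_simps)
    then have "(8/3)^2 \<le> (3 - y)^2" by (simp add: power2_eq_square)
    then have "8/3 \<le> 3 - y" by (rule power2_le_imp_le) (use y1 in simp)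
    then have y3: "y \<le> 1/3" by simp
    show False
    proof (cases "p = 1")
      case True then show False using y3 unfolding y_def by simp
    next
      case False
      then have p2: "p \<ge> 2" using p by auto
      then have "s^(p-1) \<le> r0^(p-1)" using r0p y3 unfolding y_def by simp
      moreover have "p - 1 = Suc (p - 2)" using p2 by simp
      ultimately have "s \<le> r0" using r0 by (metis less_imp_le power_le_imp_le_base)
      then show False using sx1 x1' by simp
    qed
  qed
  show ?thesis using gr sS s0 x3 unfolding S_def P_def by auto
qed

lemma blaschke_le:
  fixes \<alpha> :: real and w :: complex
  assumes "0 \<le> \<alpha>" "\<alpha> \<le> 1" "cmod w \<le> 1"
  shows "cmod (w - of_real \<alpha>) \<le> cmod (1 - of_real \<alpha> * w)"
proof -
  have w2: "(Re w)^2 + (Im w)^2 \<le> 1" using assms(3) by (metis cmod_power2 power_le_one norm_ge_zero)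
  have "(cmod (w - of_real \<alpha>))^2 = (Re w - \<alpha>)^2 + (Im w)^2" by (simp add: cmod_power2)
  also have "\<dots> \<le> (1 - \<alpha> * Re w)^2 + (\<alpha> * Im w)^2"
  proof -
    have "(1 - \<alpha> * Re w)^2 + (\<alpha> * Im w)^2 - ((Re w - \<alpha>)^2 + (Im w)^2) = (1 - \<alpha>^2) * (1 - ((Re w)^2 + (Im w)^2))"
      by (simp add: power2_eq_square algebra_simps)
    moreover have "(1 - \<alpha>^2) * (1 - ((Re w)^2 + (Im w)^2)) \<ge> 0"
      using assms w2 by (intro mult_nonneg_nonneg) (auto simp: power_le_one)
    ultimately show ?thesis by linarith
  qed
  also have "\<dots> = (cmod (1 - of_real \<alpha> * w))^2" by (simp add: cmod_power2)
  finally show ?thesis by (rule power2_le_imp_le) simp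
qed

lemma reindex_pk:
  fixes F :: "nat \<Rightarrow> 'a::real_normed_vector"
  assumes p: "p \<ge> 1" and zero: "\<And>n. \<not> (n \<ge> 1 \<and> p dvd (n - 1)) \<Longrightarrow> F n = 0"
  shows "(\<lambda>k. F (p * k + 1)) sums s \<longleftrightarrow> F sums s"
proof (rule sums_mono_reindex)
  show "strict_mono (\<lambda>k. p * k + 1)" using p by (intro strict_monoI) simp
  fix n assume n: "n \<notin> range (\<lambda>k. p * k + 1)"
  show "F n = 0"
  proof (rule zero, rule notI)
    assume h: "1 \<le> n \<and> p dvd n - 1"
    then obtain k where "n - 1 = p * k" by (auto elim: dvdE)
    then have "n = p * k + 1" using h by simp
    then show False using n by auto
  qed
qed

lemma extremal:
  fixes p :: nat and r \<alpha> :: real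
  assumes p: "p \<ge> 1" and r: "0 < r" "r < 1" and P: "bohr_poly p r = 0" and x3: "r^p > 1/3"
    and \<alpha>def: "\<alpha> = (1 - sqrt (1 - r ^ (2 * p)) / sqrt 2) / r ^ p"
  shows "\<exists>c :: nat \<Rightarrow> complex.
           (\<forall>z\<in>ball 0 1. (\<lambda>n. c n * z ^ n) sums ((\<lambda>z::complex. z * (z ^ p - complex_of_real \<alpha>) / (1 - complex_of_real \<alpha> * z ^ p)) z)) \<and>
           p_symmetric_coeffs p c \<and>
           (\<forall>z\<in>ball 0 1. norm ((\<lambda>z::complex. z * (z ^ p - complex_of_real \<alpha>) / (1 - complex_of_real \<alpha> * z ^ p)) z) \<le> 1) \<and>
           majorant c r \<le> 1 \<and>
           (\<forall>r'. r < r' \<and> r' < 1 \<longrightarrow> majorant c r' > 1)"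
proof -
  define x where "x = r^p"
  define y where "y = r^(p-1)"
  define t where "t = sqrt (1 - x^2) / sqrt 2"
  have x0: "0 < x" "x < 1" unfolding x_def using r p by (auto simp: power_less_one_iff)
  have xy: "x = r * y" unfolding x_def y_def by (rule pow_split[OF p])
  have y1: "0 < y" "y \<le> 1" unfolding y_def using r by (auto simp: power_le_one)
  have eq: "- 6 * y + y^2 + 8 * x^2 + 1 = 0" using P unfolding poly_xy[OF p] x_def y_def .
  have x2: "x^2 < 1" using x0 by (simp add: power_less_one_iff)
  have t2: "t^2 = (1 - x^2) / 2" unfolding t_def using x2 by (simp add: power_divide)
  have t0: "t > 0" unfolding t_def using x2 by simp
  have "(3 - y)^2 = (4 * t)^2" using eq t2 by (simp add: power2_eq_square algebra_simps)
  then have y4: "3 - y = 4 * t" by (rule power2_eq_imp_eq) (use y1 t0 in auto)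
  have t1: "t < 1"
  proof -
    have "2 * t^2 = 1 - x^2" using t2 by simp
    then have "t^2 < 1" using zero_le_power2[of x] by linarith
    then have "t^2 < 1^2" by simp
    show ?thesis by (rule power2_less_imp_less[OF \<open>t^2 < 1^2\<close>]) simp
  qed
  have \<alpha>x: "\<alpha> = (1 - t) / x"
  proof -
    have h: "r ^ (2 * p) = (r^p)^2" by (simp add: power_mult[symmetric] mult.commute)
    show ?thesis by (simp only: \<alpha>def h t_def x_def)
  qed
  have a0: "0 < \<alpha>" unfolding \<alpha>x using t1 x0 by simp
  have a1: "\<alpha> < 1"
  proof -
    have x13: "x > 1/3" using x3 unfolding x_def .
    have "t^2 - (1 - x)^2 = (1 - x) * (3 * x - 1) / 2" unfolding t2 by (simp add: power2_eq_square field_simps)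
    moreover have "(1 - x) * (3 * x - 1) > 0" using x0 x13 by (intro mult_pos_pos) auto
    ultimately have "(1 - x)^2 < t^2" by simp
    then have "1 - x < t" by (rule power2_less_imp_less) (use t0 in simp)
    then show ?thesis unfolding \<alpha>x using x0 by simp
  qed
  have a2: "0 \<le> 1 - \<alpha>^2"
  proof -
    have "\<alpha>^2 \<le> 1^2" using a0 a1 by (intro power_mono) auto
    then show ?thesis by simp
  qed
  have absa: "\<bar>\<alpha>\<bar> = \<alpha>" using a0 by simp
  have absa2: "\<bar>1 - \<alpha>^2\<bar> = 1 - \<alpha>^2" using a2 by simp
  define Mc where "Mc = (\<lambda>s::real. s * (\<alpha> + (1 - \<alpha>^2) * s^p / (1 - \<alpha> * s^p)))"
  define \<beta> where "\<beta> = (\<lambda>k::nat. if k = 0 then - complex_of_real \<alpha> else complex_of_real ((1 - \<alpha>^2) * \<alpha>^(k-1)))"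
  define c where "c = (\<lambda>n. if n \<ge> 1 \<and> p dvd (n - 1) then \<beta> ((n - 1) div p) else 0)"
  have cG: "c (p * k + 1) = \<beta> k" for k unfolding c_def using p by simp
  have czero: "\<And>n. \<not> (n \<ge> 1 \<and> p dvd (n - 1)) \<Longrightarrow> c n = 0" unfolding c_def by (rule if_not_P)
  have symm: "p_symmetric_coeffs p c"
    unfolding p_symmetric_coeffs_def
  proof (intro allI impI)
    fix n assume "c n \<noteq> 0"
    then have h: "n \<ge> 1 \<and> p dvd (n - 1)" using czero by blast
    then obtain k where "n - 1 = p * k" by (auto elim: dvdE)
    then show "\<exists>k. n = p * k + 1" using h by (intro exI[of _ k]) simp
  qed
  have sums_g: "(\<lambda>n. c n * z ^ n) sums (z * (z ^ p - complex_of_real \<alpha>) / (1 - complex_of_real \<alpha> * z ^ p))"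
    if z: "z \<in> ball 0 1" for z :: complex
  proof -
    define w where "w = z^p"
    have nw: "cmod w < 1" unfolding w_def using z p by (simp add: norm_power power_less_one_iff)
    have "\<alpha> * cmod w \<le> 1 * cmod w" using a1 by (intro mult_right_mono) auto
    then have naw: "cmod (complex_of_real \<alpha> * w) < 1"
      using nw absa by (simp add: norm_mult)
    have den: "1 - complex_of_real \<alpha> * w \<noteq> 0" using naw by auto
    have geo: "(\<lambda>k. (complex_of_real \<alpha> * w)^k) sums (1 / (1 - complex_of_real \<alpha> * w))"
      by (rule geometric_sums[OF naw])
    have "(\<lambda>k. \<beta> (Suc k) * w^(Suc k)) = (\<lambda>k. (complex_of_real (1 - \<alpha>^2) * w) * (complex_of_real \<alpha> * w)^k)"
      unfolding \<beta>_def by (auto simp: power_mult_distrib mult_ac)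
    then have "(\<lambda>k. \<beta> (Suc k) * w^(Suc k)) sums ((complex_of_real (1 - \<alpha>^2) * w) * (1 / (1 - complex_of_real \<alpha> * w)))"
      using sums_mult[OF geo] by simp
    then have "(\<lambda>k. \<beta> k * w^k) sums ((complex_of_real (1 - \<alpha>^2) * w) * (1 / (1 - complex_of_real \<alpha> * w)) + \<beta> 0 * w^0)"
      by (subst (asm) sums_Suc_iff[where f="\<lambda>k. \<beta> k * w^k"])
    also have "(complex_of_real (1 - \<alpha>^2) * w) * (1 / (1 - complex_of_real \<alpha> * w)) + \<beta> 0 * w^0
        = (w - complex_of_real \<alpha>) / (1 - complex_of_real \<alpha> * w)"
      unfolding \<beta>_def using den by (simp add: field_simps power2_eq_square)
    finally have sb: "(\<lambda>k. \<beta> k * w^k) sums ((w - complex_of_real \<alpha>) / (1 - complex_of_real \<alpha> * w))" .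
    have "(\<lambda>k. c (p * k + 1) * z ^ (p * k + 1)) = (\<lambda>k. z * (\<beta> k * w^k))"
    proof -
      have pc: "\<And>k. (z^k)^p = (z^p)^k" by (simp add: power_mult[symmetric] mult.commute)
      show ?thesis unfolding cG w_def by (auto simp: power_add power_mult mult_ac pc)
    qed
    moreover have "(\<lambda>k. z * (\<beta> k * w^k)) sums (z * ((w - complex_of_real \<alpha>) / (1 - complex_of_real \<alpha> * w)))"
      by (rule sums_mult[OF sb])
    ultimately have sk: "(\<lambda>k. c (p * k + 1) * z ^ (p * k + 1)) sums (z * (z ^ p - complex_of_real \<alpha>) / (1 - complex_of_real \<alpha> * z ^ p))"
      by (simp add: w_def)
    have zero: "\<And>n. \<not> (n \<ge> 1 \<and> p dvd (n - 1)) \<Longrightarrow> c n * z^n = 0" using czero by simp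
    show ?thesis by (rule iffD1[OF reindex_pk[where F="\<lambda>n. c n * z^n", OF p zero] sk])
  qed
  have bound: "norm (z * (z ^ p - complex_of_real \<alpha>) / (1 - complex_of_real \<alpha> * z ^ p)) \<le> 1"
    if z: "z \<in> ball 0 1" for z :: complex
  proof -
    define w where "w = z^p"
    have nz: "cmod z < 1" using z by simp
    have nw: "cmod w \<le> 1" unfolding w_def using nz by (simp add: norm_power power_le_one)
    have bl: "cmod (w - of_real \<alpha>) \<le> cmod (1 - of_real \<alpha> * w)"
      by (rule blaschke_le) (use a0 a1 nw in auto)
    have "cmod (of_real \<alpha> * w) \<le> \<alpha>" using nw a0 absa by (simp add: norm_mult mult_left_le)
    moreover have "norm (1::complex) - cmod (of_real \<alpha> * w) \<le> cmod (1 - of_real \<alpha> * w)"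
      by (rule norm_triangle_ineq2)
    ultimately have "cmod (1 - of_real \<alpha> * w) > 0" using a1 norm_one[where 'a=complex] by linarith
    then have "cmod ((w - of_real \<alpha>) / (1 - of_real \<alpha> * w)) \<le> 1"
      using bl by (simp add: norm_divide divide_le_eq_1)
    then have "cmod z * cmod ((w - of_real \<alpha>) / (1 - of_real \<alpha> * w)) \<le> 1 * 1"
      using nz by (intro mult_mono) auto
    then show ?thesis by (simp add: w_def norm_mult norm_divide)
  qed
  have maj: "majorant c s = Mc s" if s: "0 \<le> s" "s < 1" for s :: real
  proof -
    define xs where "xs = s^p"
    have xs: "0 \<le> xs" "xs < 1" unfolding xs_def using s p by (auto simp: power_less_one_iff)
    have axs1: "\<alpha> * xs \<le> \<alpha> * 1" using xs a0 by (intro mult_left_mono) auto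
    have axs0: "0 \<le> \<alpha> * xs" using xs a0 by simp
    have axs: "norm (\<alpha> * xs) < 1" using axs0 axs1 a1 by simp
    have dxs: "1 - \<alpha> * xs \<noteq> 0" using axs1 a1 by simp
    have geo: "(\<lambda>k. (\<alpha> * xs)^k) sums (1 / (1 - \<alpha> * xs))" by (rule geometric_sums[OF axs])
    have nb: "cmod (\<beta> k) = (if k = 0 then \<alpha> else (1 - \<alpha>^2) * \<alpha>^(k-1))" for k
    proof (cases "k = 0")
      case True then show ?thesis by (simp add: \<beta>_def absa)
    next
      case False
      have "\<beta> k = complex_of_real ((1 - \<alpha>^2) * \<alpha>^(k-1))" using False unfolding \<beta>_def by simp
      then have "cmod (\<beta> k) = \<bar>(1 - \<alpha>^2) * \<alpha>^(k-1)\<bar>" by (simp only: norm_of_real)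
      then show ?thesis using False by (simp add: abs_mult power_abs absa absa2)
    qed
    have "(\<lambda>k. cmod (\<beta> (Suc k)) * s^(p * Suc k + 1)) = (\<lambda>k. (s * (1 - \<alpha>^2) * xs) * (\<alpha> * xs)^k)"
    proof -
      have pc: "\<And>k. (s^k)^p = (s^p)^k" by (simp add: power_mult[symmetric] mult.commute)
      show ?thesis unfolding nb xs_def by (auto simp: power_add power_mult power_mult_distrib mult_ac pc)
    qed
    then have "(\<lambda>k. cmod (\<beta> (Suc k)) * s^(p * Suc k + 1)) sums ((s * (1 - \<alpha>^2) * xs) * (1 / (1 - \<alpha> * xs)))"
      using sums_mult[OF geo] by simp
    then have "(\<lambda>k. cmod (\<beta> k) * s^(p * k + 1)) sums ((s * (1 - \<alpha>^2) * xs) * (1 / (1 - \<alpha> * xs)) + cmod (\<beta> 0) * s^(p * 0 + 1))"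
      by (subst (asm) sums_Suc_iff[where f="\<lambda>k. cmod (\<beta> k) * s^(p * k + 1)"])
    also have "(s * (1 - \<alpha>^2) * xs) * (1 / (1 - \<alpha> * xs)) + cmod (\<beta> 0) * s^(p * 0 + 1) = Mc s"
      unfolding Mc_def xs_def[symmetric] nb using dxs by (simp add: field_simps)
    finally have fs: "(\<lambda>k. cmod (c (p * k + 1)) * s^(p * k + 1)) sums Mc s" unfolding cG .
    have zero: "\<And>n. \<not> (n \<ge> 1 \<and> p dvd (n - 1)) \<Longrightarrow> cmod (c n) * s^n = 0" using czero by simp
    have "(\<lambda>n. cmod (c n) * s^n) sums Mc s"
      by (rule iffD1[OF reindex_pk[where F="\<lambda>n. cmod (c n) * s^n", OF p zero] fs])
    then show ?thesis unfolding majorant_def by (rule sums_unique[symmetric])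
  qed
  have Mc1: "Mc r = 1"
  proof -
    have ax: "\<alpha> * x = 1 - t" unfolding \<alpha>x using x0 by simp
    have x2t: "x^2 = 1 - 2 * t^2" using t2 by simp
    have yt: "y = 3 - 4 * t" using y4 by simp
    have d: "1 - \<alpha> * x = t" using ax by simp
    have "\<alpha> + (1 - \<alpha>^2) * x / (1 - \<alpha> * x) = \<alpha> + (1 - \<alpha>^2) * x / t" by (simp only: d)
    also have "\<dots> = (\<alpha> * x * t + (x^2 - (\<alpha> * x)^2)) / (x * t)"
      using x0 t0 by (simp add: field_simps power2_eq_square)
    also have "\<alpha> * x * t + (x^2 - (\<alpha> * x)^2) = (1 - t) * t + x^2 - (1 - t)^2" by (simp only: ax)
    also have "(1 - t) * t + x^2 - (1 - t)^2 = y * t" unfolding x2t yt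
      by (simp add: power2_eq_square algebra_simps)
    finally have "\<alpha> + (1 - \<alpha>^2) * x / (1 - \<alpha> * x) = y / x" using t0 by simp
    then have "Mc r = r * (y / x)" unfolding Mc_def x_def by simp
    also have "\<dots> = 1" using xy r y1 by simp
    finally show ?thesis .
  qed
  have Mcgt: "Mc r' > 1" if rr: "r < r'" "r' < 1" for r'
  proof -
    define x' where "x' = r'^p"
    have xx: "x < x'" unfolding x_def x'_def using rr r p by (intro power_strict_mono) auto
    have x'1: "x' < 1" unfolding x'_def using rr r p by (simp add: power_less_one_iff)
    have ax1: "\<alpha> * x' \<le> x'" using a0 a1 xx x0 by (intro mult_left_le_one_le) auto
    have ax2: "\<alpha> * x \<le> \<alpha> * x'" using a0 xx by (intro mult_left_mono) auto
    have d1: "1 - \<alpha> * x > 0" "1 - \<alpha> * x' > 0" using ax1 ax2 x'1 by auto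
    have "x / (1 - \<alpha> * x) \<le> x' / (1 - \<alpha> * x')"
      by (rule frac_le) (use xx x0 d1 ax2 in auto)
    then have "(1 - \<alpha>^2) * (x / (1 - \<alpha> * x)) \<le> (1 - \<alpha>^2) * (x' / (1 - \<alpha> * x'))"
      by (rule mult_left_mono) (rule a2)
    then have inner: "\<alpha> + (1 - \<alpha>^2) * x / (1 - \<alpha> * x) \<le> \<alpha> + (1 - \<alpha>^2) * x' / (1 - \<alpha> * x')" by simp
    have ipos: "\<alpha> + (1 - \<alpha>^2) * x / (1 - \<alpha> * x) > 0"
      using a0 a2 d1 x0 by (intro add_pos_nonneg divide_nonneg_pos mult_nonneg_nonneg) auto
    have "1 = r * (\<alpha> + (1 - \<alpha>^2) * x / (1 - \<alpha> * x))" using Mc1 unfolding Mc_def x_def by simp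
    also have "\<dots> < r' * (\<alpha> + (1 - \<alpha>^2) * x' / (1 - \<alpha> * x'))"
      by (rule mult_less_le_imp_less[OF rr(1) inner]) (use r ipos in auto)
    also have "\<dots> = Mc r'" unfolding Mc_def x'_def by simp
    finally show ?thesis .
  qed
  show ?thesis
  proof (intro exI[of _ c] conjI ballI allI impI)
    show "p_symmetric_coeffs p c" by (rule symm)
    show "majorant c r \<le> 1" using maj[of r] r Mc1 by simp
  next
    fix z :: complex assume "z \<in> ball 0 1"
    then show "(\<lambda>n. c n * z ^ n) sums ((\<lambda>z::complex. z * (z ^ p - complex_of_real \<alpha>) / (1 - complex_of_real \<alpha> * z ^ p)) z)"
      using sums_g by simp
  next
    fix z :: complex assume "z \<in> ball 0 1"
    then show "norm ((\<lambda>z::complex. z * (z ^ p - complex_of_real \<alpha>) / (1 - complex_of_real \<alpha> * z ^ p)) z) \<le> 1"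
      using bound by simp
  next
    fix r' assume "r < r' \<and> r' < 1"
    then show "majorant c r' > 1" using maj[of r'] Mcgt[of r'] r by simp
  qed
qed

lemma amgm_series:
  fixes U W :: "nat \<Rightarrow> real" and l :: real
  assumes sU: "summable (\<lambda>k. (U k)^2)" and sW: "summable (\<lambda>k. (W k)^2)" and l: "l > 0"
  shows "summable (\<lambda>k. U k * W k) \<and> (\<Sum>k. U k * W k) \<le> l/2 * (\<Sum>k. (U k)^2) + 1/(2*l) * (\<Sum>k. (W k)^2)"
proof -
  have pt: "U k * W k \<le> l/2 * (U k)^2 + 1/(2*l) * (W k)^2" for k
  proof -
    have "0 \<le> (l * U k - W k)^2" by simp
    then have "2 * l * (U k * W k) \<le> l^2 * (U k)^2 + (W k)^2" by (simp add: power2_eq_square algebra_simps)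
    then have "2 * l * (U k * W k) \<le> 2 * l * (l/2 * (U k)^2 + 1/(2*l) * (W k)^2)"
      using l by (simp add: algebra_simps power2_eq_square)
    then show ?thesis using l by (simp add: mult_le_cancel_left)
  qed
  have sR: "summable (\<lambda>k. l/2 * (U k)^2 + 1/(2*l) * (W k)^2)"
    by (intro summable_add summable_mult sU sW)
  have sUW: "summable (\<lambda>k. U k * W k)"
  proof (rule summable_comparison_test'[OF sR])
    fix k
    have "norm (U k * W k) = \<bar>U k\<bar> * \<bar>W k\<bar>" by (simp add: abs_mult)
    also have "\<dots> \<le> l/2 * (\<bar>U k\<bar>)^2 + 1/(2*l) * (\<bar>W k\<bar>)^2"
    proof -
      have "0 \<le> (l * \<bar>U k\<bar> - \<bar>W k\<bar>)^2" by simp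
      then have "2 * l * (\<bar>U k\<bar> * \<bar>W k\<bar>) \<le> 2 * l * (l/2 * (\<bar>U k\<bar>)^2 + 1/(2*l) * (\<bar>W k\<bar>)^2)"
        using l by (simp add: power2_eq_square algebra_simps)
      then show ?thesis using l by (simp add: mult_le_cancel_left)
    qed
    also have "\<dots> = l/2 * (U k)^2 + 1/(2*l) * (W k)^2" by simp
    finally show "norm (U k * W k) \<le> l/2 * (U k)^2 + 1/(2*l) * (W k)^2" .
  qed
  have "(\<Sum>k. U k * W k) \<le> (\<Sum>k. l/2 * (U k)^2 + 1/(2*l) * (W k)^2)"
    by (rule suminf_le[OF pt sUW sR])
  also have "\<dots> = (\<Sum>k. l/2 * (U k)^2) + (\<Sum>k. 1/(2*l) * (W k)^2)"
    by (rule suminf_add[symmetric]) (intro summable_mult sU sW)+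
  also have "\<dots> = l/2 * (\<Sum>k. (U k)^2) + 1/(2*l) * (\<Sum>k. (W k)^2)"
    using sU sW by (simp only: suminf_mult)
  finally show ?thesis using sUW by simp
qed

lemma sq_summable_r:
  fixes \<beta> :: "nat \<Rightarrow> real" and \<rho> :: real
  assumes "0 \<le> \<rho>" "summable (\<lambda>k. \<beta> k * \<rho>^k)" "\<And>k. 0 \<le> \<beta> k"
  shows "summable (\<lambda>k. (\<beta> k)^2 * \<rho>^(2*k))"
  using sq_summable[of \<rho> "\<lambda>k. complex_of_real (\<beta> k)"] assms by simp

lemma geo_tail_sq:
  fixes q :: real assumes "0 \<le> q" "q < 1"
  shows "(\<lambda>k. (if k = 0 then 0 else q^k)) sums (q / (1 - q))"
proof -
  have g: "(\<lambda>k. q^k) sums (1 / (1 - q))" by (rule geometric_sums) (use assms in simp)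
  have "(\<lambda>k. q^k - (if k = 0 then q^k else 0)) sums (1 / (1 - q) - q^0)"
    by (intro sums_diff g sums_single)
  moreover have "(\<lambda>k. q^k - (if k = 0 then q^k else 0)) = (\<lambda>k. (if k = 0 then 0 else q^k))" by auto
  moreover have "1 / (1 - q) - q^0 = q / (1 - q)" using assms by (simp add: field_simps)
  ultimately show ?thesis by simp
qed

lemma final_real:
  fixes \<beta> :: "nat \<Rightarrow> real" and A R X Y :: real
  assumes \<beta>0: "\<beta> 0 = 0" and \<beta>nn: "\<And>k. 0 \<le> \<beta> k"
    and SB: "\<And>s. 0 \<le> s \<Longrightarrow> s < 1 \<Longrightarrow> summable (\<lambda>k. \<beta> k * s^k)"
    and A: "0 \<le> A" "A \<le> 1"
    and bes: "\<And>\<rho>. 0 < \<rho> \<Longrightarrow> \<rho> < 1 \<Longrightarrow> A^2 + (\<Sum>k. (\<beta> k)^2 * \<rho>^(2*k)) \<le> 1"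
    and sch: "\<And>\<rho>. A < 1 \<Longrightarrow> 0 < \<rho> \<Longrightarrow> \<rho> < 1 \<Longrightarrow>
               (\<Sum>k. (\<beta> k)^2 * \<rho>^(2*k)) \<le> \<rho>^2 * ((1 - A^2)^2 + A^2 * (\<Sum>k. (\<beta> k)^2 * \<rho>^(2*k)))"
    and R: "0 < R" "R < 1" and X: "0 < X" "X < 1" "X = R * Y" and Y: "Y \<le> 1"
    and eq: "- 6 * Y + Y^2 + 8 * X^2 + 1 = 0"
  shows "R * (A + (\<Sum>k. \<beta> k * X^k)) \<le> 1"
proof -
  define T where "T = (\<lambda>\<rho>. \<Sum>k. (\<beta> k)^2 * \<rho>^(2*k))"
  have sT: "summable (\<lambda>k. (\<beta> k)^2 * \<rho>^(2*k))" if "0 \<le> \<rho>" "\<rho> < 1" for \<rho>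
    using sq_summable_r[OF that(1) SB[OF that] \<beta>nn] .
  have T0: "T \<rho> \<ge> 0" if "0 \<le> \<rho>" "\<rho> < 1" for \<rho>
    unfolding T_def using sT[OF that] by (intro suminf_nonneg) auto
  have sX: "summable (\<lambda>k. \<beta> k * X^k)" using SB X by simp
  have S0: "(\<Sum>k. \<beta> k * X^k) \<ge> 0" using sX \<beta>nn X by (intro suminf_nonneg) auto
  have X2: "X^2 \<le> 1/2"
  proof -
    have "0 \<le> (1 - Y) * (5 - Y)" using Y by (intro mult_nonneg_nonneg) auto
    then show ?thesis using eq by (simp add: algebra_simps power2_eq_square)
  qed
  have R1X: "R * (2 * X) \<le> 1"
  proof -
    have "R * (X + X * (1 - X^2) / (1 - X * X)) \<le> 1"
      by (rule R1[OF _ _ X(1) X(2) R(1) X(3) eq]) (use X in auto)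
    moreover have "1 - X * X \<noteq> 0" using X mult_strict_mono[of X 1 X 1] by simp
    then have "X * (1 - X^2) / (1 - X * X) = X" by (simp add: power2_eq_square)
    ultimately show ?thesis by simp
  qed
  show ?thesis
  proof (cases "A = 1")
    case True
    have "1 + T (1/2) \<le> 1" using bes[of "1/2"] True unfolding T_def by simp
    then have "T (1/2) = 0" using T0[of "1/2"] by simp
    then have "\<forall>k. (\<beta> k)^2 * (1/2)^(2*k) = 0"
      unfolding T_def using suminf_eq_zero_iff[OF sT[of "1/2"]] by simp
    then have "\<forall>k. \<beta> k = 0" by simp
    then have "(\<Sum>k. \<beta> k * X^k) = 0" by simp
    then show ?thesis using True R by simp
  next
    case False
    then have A1: "A < 1" using A by simp
    show ?thesis
    proof (cases "X < A")
      case True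
      define \<sigma> where "\<sigma> = sqrt (X / A)"
      have A0: "A > 0" using True X by simp
      have XA: "X / A < 1" using True A0 by simp
      have \<sigma>2: "\<sigma>^2 = X / A" unfolding \<sigma>_def using X A0 by simp
      have \<sigma>0: "0 < \<sigma>" "\<sigma> < 1" unfolding \<sigma>_def using X A0 XA by auto
      have "A * X \<le> 1 * X" using A X by (intro mult_right_mono) auto
      then have AX: "A * X < 1" using X by simp
      have d: "1 - A^2 * \<sigma>^2 = 1 - A * X" unfolding \<sigma>2 using A0 by (simp add: power2_eq_square)
      define U0 where "U0 = (X / A) * (1 - A^2)^2 / (1 - A * X)"
      define B where "B = X * (1 - A^2) / (1 - A * X)"
      define V where "V = X * A / (1 - X * A)"
      have A2: "0 < 1 - A^2" using A1 A by (simp add: power_less_one_iff)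
      have U0pos: "U0 > 0" unfolding U0_def using X A0 A2 AX by simp
      have Bpos: "B > 0" unfolding B_def using X A2 AX by simp
      have TU: "T \<sigma> \<le> U0"
      proof -
        have "T \<sigma> \<le> \<sigma>^2 * ((1 - A^2)^2 + A^2 * T \<sigma>)" using sch[OF A1 \<sigma>0] unfolding T_def .
        then have "T \<sigma> * (1 - A^2 * \<sigma>^2) \<le> \<sigma>^2 * (1 - A^2)^2" by (simp add: algebra_simps)
        then have "T \<sigma> * (1 - A * X) \<le> (X / A) * (1 - A^2)^2" unfolding d[symmetric] \<sigma>2[symmetric] .
        then have h: "T \<sigma> * (1 - A * X) \<le> (X / A) * (1 - A^2)^2" .
        show ?thesis unfolding U0_def by (subst pos_le_divide_eq) (use h AX in auto)
      qed
      define U where "U = (\<lambda>k. \<beta> k * \<sigma>^k)"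
      define W where "W = (\<lambda>k::nat. if k = 0 then 0 else (X / \<sigma>)^k)"
      have UW: "\<beta> k * X^k = U k * W k" for k
      proof (cases "k = 0")
        case True then show ?thesis using \<beta>0 unfolding U_def W_def by simp
      next
        case False
        have "\<sigma>^k * (X / \<sigma>)^k = X^k" using \<sigma>0 by (simp add: power_mult_distrib[symmetric])
        then show ?thesis using False unfolding U_def W_def by (simp add: mult.assoc)
      qed
      have U2: "(\<lambda>k. (U k)^2) = (\<lambda>k. (\<beta> k)^2 * \<sigma>^(2*k))" unfolding U_def
        by (simp add: power_mult_distrib power_mult[symmetric] mult.commute)
      have q: "(X / \<sigma>)^2 = X * A" unfolding power_divide \<sigma>2 using A0 X by (simp add: field_simps power2_eq_square)
      have pw: "((X / \<sigma>)^k)^2 = (X * A)^k" for k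
      proof -
        have "((X / \<sigma>)^k)^2 = ((X / \<sigma>)^2)^k" by (simp add: power_mult[symmetric] mult.commute)
        then show ?thesis by (simp only: q)
      qed
      have W2: "(\<lambda>k. (W k)^2) = (\<lambda>k. if k = 0 then 0 else (X * A)^k)" unfolding W_def
        by (rule ext) (simp add: pw)
      have sW: "(\<lambda>k. (W k)^2) sums V" unfolding W2 V_def
        by (rule geo_tail_sq) (use X A AX in \<open>auto simp: mult.commute\<close>)
      define l where "l = B / U0"
      have l0: "l > 0" unfolding l_def using Bpos U0pos by simp
      have am: "(\<Sum>k. U k * W k) \<le> l/2 * (\<Sum>k. (U k)^2) + 1/(2*l) * (\<Sum>k. (W k)^2)"
        using amgm_series[OF _ sums_summable[OF sW] l0, of U] sT[of \<sigma>] \<sigma>0 unfolding U2 by simp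
      have "(\<Sum>k. \<beta> k * X^k) = (\<Sum>k. U k * W k)" using UW by simp
      also have "\<dots> \<le> l/2 * T \<sigma> + 1/(2*l) * V" using am sW unfolding U2 T_def by (simp add: sums_iff)
      also have "\<dots> \<le> l/2 * U0 + 1/(2*l) * V" using TU l0 by simp
      also have "\<dots> = B"
      proof -
        define D where "D = 1 - A * X"
        have Dnz: "D \<noteq> 0" using AX unfolding D_def by simp
        have XA': "X * A = A * X" by (simp add: mult.commute)
        have "V * U0 = (X * A / D) * ((X / A) * (1 - A^2)^2 / D)" unfolding V_def U0_def D_def XA' ..
        also have "\<dots> = (X * (1 - A^2) / D)^2" using A0 Dnz by (simp add: field_simps power2_eq_square)
        finally have VU: "V * U0 = B^2" unfolding B_def D_def .
        have "l/2 * U0 + 1/(2*l) * V = B/2 + V * U0 / (2 * B)"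
          unfolding l_def using U0pos Bpos by (simp add: field_simps)
        also have "\<dots> = B" unfolding VU using Bpos by (simp add: power2_eq_square)
        finally show ?thesis .
      qed
      finally have SB': "(\<Sum>k. \<beta> k * X^k) \<le> B" .
      have "R * (A + (\<Sum>k. \<beta> k * X^k)) \<le> R * (A + B)" using SB' R by simp
      also have "\<dots> \<le> 1" unfolding B_def by (rule R1[OF A X(1) X(2) R(1) X(3) eq])
      finally show ?thesis .
    next
      case False
      then have AX: "A \<le> X" by simp
      have fin: "(\<Sum>k<n. (\<beta> k)^2) \<le> 1 - A^2" for n
      proof -
        have lim: "((\<lambda>\<rho>. \<Sum>k<n. (\<beta> k)^2 * \<rho>^(2*k)) \<longlongrightarrow> (\<Sum>k<n. (\<beta> k)^2 * 1^(2*k))) (at_left 1)"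
          by (intro tendsto_intros)
        have ev: "eventually (\<lambda>\<rho>. (\<Sum>k<n. (\<beta> k)^2 * \<rho>^(2*k)) \<le> 1 - A^2) (at_left (1::real))"
        proof -
          have "eventually (\<lambda>\<rho>. \<rho> \<in> {0<..<1}) (at_left (1::real))" by (rule eventually_at_left_real) simp
          then show ?thesis
          proof (rule eventually_mono)
            fix \<rho> :: real assume "\<rho> \<in> {0<..<1}"
            then have \<rho>: "0 < \<rho>" "\<rho> < 1" by auto
            have "(\<Sum>k<n. (\<beta> k)^2 * \<rho>^(2*k)) \<le> T \<rho>" unfolding T_def
              by (rule sum_le_suminf[OF sT]) (use \<rho> in auto)
            also have "\<dots> \<le> 1 - A^2" using bes[OF \<rho>] unfolding T_def by simp
            finally show "(\<Sum>k<n. (\<beta> k)^2 * \<rho>^(2*k)) \<le> 1 - A^2" .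
          qed
        qed
        have "(\<Sum>k<n. (\<beta> k)^2 * 1^(2*k)) \<le> 1 - A^2"
          by (rule tendsto_upperbound[OF lim ev]) simp
        then show ?thesis by simp
      qed
      have sB2: "summable (\<lambda>k. (\<beta> k)^2)" by (rule summableI_nonneg_bounded[OF _ fin]) simp
      have B2: "(\<Sum>k. (\<beta> k)^2) \<le> 1 - A^2" by (rule suminf_le_const[OF sB2 fin])
      define W where "W = (\<lambda>k::nat. if k = 0 then 0 else X^k)"
      have UW: "\<beta> k * X^k = \<beta> k * W k" for k using \<beta>0 unfolding W_def by (cases "k = 0") auto
      have pw: "(X^k)^2 = (X^2)^k" for k by (simp add: power_mult[symmetric] mult.commute)
      have W2: "(\<lambda>k. (W k)^2) = (\<lambda>k. if k = 0 then 0 else (X^2)^k)" unfolding W_def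
        by (rule ext) (simp add: pw)
      have sW: "(\<lambda>k. (W k)^2) sums (X^2 / (1 - X^2))" unfolding W2
        by (rule geo_tail_sq) (use X in \<open>auto simp: power_less_one_iff\<close>)
      define s where "s = sqrt (1 - A^2)"
      define c where "c = sqrt (1 - X^2)"
      have X21: "X^2 < 1" using X2 by simp
      have "A^2 \<le> X^2" using A AX by (intro power_mono) auto
      then have A21: "A^2 < 1" using X21 by simp
      have s0: "s > 0" "s^2 = 1 - A^2" unfolding s_def using A21 by auto
      have c0: "c > 0" "c^2 = 1 - X^2" unfolding c_def using X21 by auto
      define l where "l = X / (s * c)"
      have l0: "l > 0" unfolding l_def using X s0 c0 by simp
      have am: "(\<Sum>k. \<beta> k * W k) \<le> l/2 * (\<Sum>k. (\<beta> k)^2) + 1/(2*l) * (\<Sum>k. (W k)^2)"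
        using amgm_series[OF sB2 sums_summable[OF sW] l0] by simp
      have "(\<Sum>k. \<beta> k * X^k) = (\<Sum>k. \<beta> k * W k)" by (simp only: UW)
      also have "\<dots> \<le> l/2 * (1 - A^2) + 1/(2*l) * (X^2 / (1 - X^2))"
      proof -
        have "l/2 * (\<Sum>k. (\<beta> k)^2) \<le> l/2 * (1 - A^2)" using B2 l0 by (intro mult_left_mono) auto
        moreover have "(\<Sum>k. (W k)^2) = X^2 / (1 - X^2)" using sW by (rule sums_unique[symmetric])
        ultimately show ?thesis using am by simp
      qed
      also have "\<dots> = X * s / c"
        unfolding l_def s0(2)[symmetric] c0(2)[symmetric] using s0 c0 X
        by (simp add: field_simps power2_eq_square)
      finally have SB': "(\<Sum>k. \<beta> k * X^k) \<le> X * sqrt (1 - A^2) / sqrt (1 - X^2)"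
        unfolding s_def c_def .
      have "A + (\<Sum>k. \<beta> k * X^k) \<le> 2 * X"
        using SB' R2[OF A(1) AX X2] by simp
      then have "R * (A + (\<Sum>k. \<beta> k * X^k)) \<le> R * (2 * X)" using R by simp
      then show ?thesis using R1X by simp
    qed
  qed
qed

lemma reindex_fwd:
  fixes F :: "nat \<Rightarrow> 'a::real_normed_vector"
  assumes s: "F sums S" and p: "p \<ge> 1" and zero: "\<forall>n. \<not> (n \<ge> 1 \<and> p dvd (n - 1)) \<longrightarrow> F n = 0"
  shows "(\<lambda>k. F (p * k + 1)) sums S"
  using reindex_pk[of p F S] p zero s by blast

lemma reindex_bwd:
  fixes F :: "nat \<Rightarrow> 'a::real_normed_vector"
  assumes s: "(\<lambda>k. F (p * k + 1)) sums S" and p: "p \<ge> 1" and zero: "\<forall>n. \<not> (n \<ge> 1 \<and> p dvd (n - 1)) \<longrightarrow> F n = 0"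
  shows "F sums S"
  using reindex_pk[of p F S] p zero s by blast

lemma schwarz_le:
  fixes g :: "complex \<Rightarrow> complex"
  assumes hol: "g holomorphic_on ball 0 1" and g0: "g 0 = 0"
    and bd: "\<And>z. norm z < 1 \<Longrightarrow> norm (g z) \<le> 1" and z: "norm z < 1"
  shows "norm (g z) \<le> norm z"
proof (rule field_le_mult_one_interval)
  fix \<tau> :: real assume \<tau>: "0 < \<tau>" "\<tau> < 1"
  have hol': "(\<lambda>z. of_real \<tau> * g z) holomorphic_on ball 0 1" by (intro holomorphic_intros hol)
  have lt: "norm (of_real \<tau> * g w) < 1" if "norm w < 1" for w
  proof -
    have "norm (of_real \<tau> * g w) = \<tau> * norm (g w)" using \<tau> by (simp add: norm_mult)
    also have "\<dots> \<le> \<tau> * 1" using bd[OF that] \<tau> by (intro mult_left_mono) auto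
    finally show ?thesis using \<tau> by simp
  qed
  have "norm (of_real \<tau> * g z) \<le> norm z"
    using Schwarz_Lemma'[of "\<lambda>z. of_real \<tau> * g z", OF hol' _ lt] g0 z by auto
  then show "\<tau> * norm (g z) \<le> norm z" using \<tau> by (simp add: norm_mult)
qed

lemma main_analytic:
  fixes p :: nat and f :: "complex \<Rightarrow> complex" and a :: "nat \<Rightarrow> complex" and R :: real
  assumes p: "p \<ge> 1" and holf: "f holomorphic_on ball 0 1"
    and sm: "\<forall>z\<in>ball 0 1. (\<lambda>n. a n * z ^ n) sums f z"
    and sym: "p_symmetric_coeffs p a" and bd: "\<forall>z\<in>ball 0 1. norm (f z) \<le> 1"
    and R: "0 < R" "R < 1" "bohr_poly p R = 0"
  shows "majorant a R \<le> 1"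
proof -
  define b where "b = (\<lambda>k. a (p * k + 1))"
  have azero: "a n = 0" if "\<not> (n \<ge> 1 \<and> p dvd (n - 1))" for n
  proof (rule ccontr)
    assume "a n \<noteq> 0"
    then obtain k where "n = p * k + 1" using sym unfolding p_symmetric_coeffs_def by blast
    then show False using that by simp
  qed
  have f0: "f 0 = 0"
  proof -
    have "(0::complex) \<in> ball 0 1" by simp
    then have "(\<lambda>n. a n * 0 ^ n) sums f 0" using sm by blast
    moreover have "(\<lambda>n. a n * 0 ^ n) sums a 0" by (rule powser_sums_zero)
    ultimately show ?thesis using azero[of 0] sums_unique2 by force
  qed
  have fz: "norm (f z) \<le> norm z" if "norm z < 1" for z
    by (rule schwarz_le[OF holf f0 _ that]) (use bd in auto)
  have absA: "summable (\<lambda>n. cmod (a n) * \<rho>^n)" if "0 \<le> \<rho>" "\<rho> < 1" for \<rho>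
  proof -
    define \<rho>' where "\<rho>' = (1 + \<rho>) / 2"
    have r': "0 \<le> \<rho>'" "\<rho>' < 1" "\<rho> < \<rho>'" unfolding \<rho>'_def using that by auto
    have "complex_of_real \<rho>' \<in> ball 0 1" using r' by simp
    then have "(\<lambda>n. a n * complex_of_real \<rho>' ^ n) sums f (complex_of_real \<rho>')"
      using sm by blast
    then have "summable (\<lambda>n. a n * complex_of_real \<rho>' ^ n)" by (rule sums_summable)
    then have "summable (\<lambda>n. norm (a n * complex_of_real \<rho> ^ n))"
      by (rule powser_insidea) (use that r' in auto)
    then show ?thesis using that by (simp add: norm_mult norm_power)
  qed
  have SBr: "summable (\<lambda>k. cmod (b k) * (\<rho>^p)^k)" if "0 < \<rho>" "\<rho> < 1" for \<rho>
  proof -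
    have zero: "\<And>n. \<not> (n \<ge> 1 \<and> p dvd (n - 1)) \<Longrightarrow> cmod (a n) * \<rho>^n = 0" using azero by simp
    have "(\<lambda>n. cmod (a n) * \<rho>^n) sums (\<Sum>n. cmod (a n) * \<rho>^n)"
      using absA[of \<rho>] that by (simp add: summable_sums)
    then have "(\<lambda>k. cmod (a (p * k + 1)) * \<rho>^(p * k + 1)) sums (\<Sum>n. cmod (a n) * \<rho>^n)"
      by (rule reindex_fwd) (use p zero in auto)
    then have "summable (\<lambda>k. cmod (a (p * k + 1)) * \<rho>^(p * k + 1) / \<rho>)"
      by (intro summable_divide sums_summable)
    moreover have "(\<lambda>k. cmod (a (p * k + 1)) * \<rho>^(p * k + 1) / \<rho>) = (\<lambda>k. cmod (b k) * (\<rho>^p)^k)"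
      using that by (auto simp: b_def power_add power_mult)
    ultimately show ?thesis by simp
  qed
  have SB: "summable (\<lambda>k. cmod (b k) * s^k)" if "0 \<le> s" "s < 1" for s
  proof (cases "s = 0")
    case True
    have "(\<lambda>k. cmod (b k) * 0^k) sums cmod (b 0)" by (rule powser_sums_zero)
    then show ?thesis using True by (simp add: sums_summable)
  next
    case False
    define \<rho> where "\<rho> = root p s"
    have \<rho>: "0 < \<rho>" "\<rho> < 1" "\<rho>^p = s" unfolding \<rho>_def using that False p
      by (auto intro: real_root_gt_zero)
    show ?thesis using SBr[OF \<rho>(1,2)] \<rho>(3) by simp
  qed
  have bsummable: "summable (\<lambda>k. b k * w^k)" if "norm w < 1" for w
  proof (rule summable_norm_cancel)
    show "summable (\<lambda>k. norm (b k * w^k))" using SB[of "norm w"] that by (simp add: norm_mult norm_power)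
  qed
  have Bsum: "(\<lambda>k. b k * (z^p)^k) sums (f z / z)" if "norm z < 1" "z \<noteq> 0" for z
  proof -
    have zero: "\<And>n. \<not> (n \<ge> 1 \<and> p dvd (n - 1)) \<Longrightarrow> a n * z^n = 0" using azero by simp
    have "z \<in> ball 0 1" using that by simp
    then have "(\<lambda>n. a n * z ^ n) sums f z" using sm by blast
    then have "(\<lambda>k. a (p * k + 1) * z ^ (p * k + 1)) sums f z"
      by (rule reindex_fwd) (use p zero in auto)
    then have "(\<lambda>k. a (p * k + 1) * z ^ (p * k + 1) / z) sums (f z / z)" by (rule sums_divide)
    moreover have "(\<lambda>k. a (p * k + 1) * z ^ (p * k + 1) / z) = (\<lambda>k. b k * (z^p)^k)"
      using that by (auto simp: b_def power_add power_mult)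
    ultimately show ?thesis by simp
  qed
  define h where "h = (\<lambda>w. \<Sum>k. b k * w^k)"
  have hb: "norm (h w) \<le> 1" if w: "norm w < 1" "w \<noteq> 0" for w
  proof -
    define z where "z = exp (ln w / of_nat p)"
    have pn: "(of_nat p :: complex) \<noteq> 0" using p by simp
    have "z^p = exp (of_nat p * (ln w / of_nat p))" unfolding z_def by (rule exp_of_nat_mult[symmetric])
    also have "\<dots> = exp (ln w)" using pn by simp
    also have "\<dots> = w" using w by simp
    finally have zp: "z^p = w" .
    have "norm z ^ p < 1" using zp w by (simp add: norm_power[symmetric])
    then have nz: "norm z < 1" using p by (simp add: power_less_one_iff)
    have z0: "z \<noteq> 0" unfolding z_def by simp
    have "h w = f z / z" unfolding h_def using Bsum[OF nz z0] zp by (simp add: sums_iff)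
    then have "norm (h w) = norm (f z) / norm z" by (simp add: norm_divide)
    also have "\<dots> \<le> 1" using fz[OF nz] z0 by simp
    finally show ?thesis .
  qed
  have hhol: "h holomorphic_on ball 0 1"
  proof -
    have cr: "conv_radius b \<ge> 1"
      by (rule conv_radius_geI_ex') (use bsummable in auto)
    show ?thesis unfolding holomorphic_on_open[OF open_ball]
    proof
      fix z :: complex assume "z \<in> ball 0 1"
      then have "ereal (norm z) < 1" by simp
      then have ez: "ereal (norm z) < conv_radius b" using cr by (rule order.strict_trans2)
      show "\<exists>f'. (h has_field_derivative f') (at z)"
        using has_field_derivative_powser[OF ez, of UNIV] unfolding h_def by blast
    qed
  qed
  have h0: "h 0 = b 0" unfolding h_def by simp
  define A where "A = cmod (b 0)"
  define u where "u = (if b 0 = 0 then 1 else cnj (b 0) / of_real A)"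
  have u1: "cmod u = 1" "u * b 0 = of_real A"
  proof -
    show "cmod u = 1" unfolding u_def A_def by (simp add: norm_divide)
    show "u * b 0 = of_real A"
    proof (cases "b 0 = 0")
      case True then show ?thesis unfolding u_def A_def by simp
    next
      case False
      have "cnj (b 0) * b 0 = of_real (A^2)" unfolding A_def using complex_norm_square[of "b 0"] by (simp add: mult.commute)
      then show ?thesis unfolding u_def using False by (simp add: A_def power2_eq_square field_simps)
    qed
  qed
  define H where "H = (\<lambda>w. u * h w)"
  have Hhol: "H holomorphic_on ball 0 1" unfolding H_def by (intro holomorphic_intros hhol)
  have H0: "H 0 = of_real A" unfolding H_def h0 using u1 by simp
  have Hb: "norm (H w) \<le> 1" if "norm w < 1" "w \<noteq> 0" for w
    unfolding H_def using hb[OF that] u1 by (simp add: norm_mult)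
  define \<beta> where "\<beta> = (\<lambda>k. if k = 0 then 0 else cmod (b k))"
  define e where "e = (\<lambda>k. if k = 0 then 0 else u * b k)"
  have ce: "cmod (e k) = \<beta> k" for k unfolding e_def \<beta>_def using u1 by (simp add: norm_mult)
  have \<beta>nn: "0 \<le> \<beta> k" for k unfolding \<beta>_def by simp
  have SBb: "summable (\<lambda>k. \<beta> k * s^k)" if "0 \<le> s" "s < 1" for s
    by (rule summable_comparison_test'[OF SB[OF that]]) (use that in \<open>auto simp: \<beta>_def\<close>)
  have sqb: "summable (\<lambda>k. (\<beta> k)^2 * \<rho>^(2*k))" if "0 \<le> \<rho>" "\<rho> < 1" for \<rho>
    by (rule sq_summable_r[OF that(1) SBb[OF that] \<beta>nn])
  have bes: "A^2 + (\<Sum>k. (\<beta> k)^2 * \<rho>^(2*k)) \<le> 1" if \<rho>: "0 < \<rho>" "\<rho> < 1" for \<rho>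
  proof -
    define d :: "nat \<Rightarrow> complex" where "d = (\<lambda>k. if k = 0 then 1 else 0)"
    have dsum: "(\<lambda>k. d k * w^k) sums 1" for w
    proof -
      have "(\<lambda>k. d k * w^k) = (\<lambda>k. if k = 0 then w^k else 0)" unfolding d_def by auto
      then show ?thesis using sums_single[of 0 "\<lambda>k. w^k"] by simp
    qed
    have se: "summable (\<lambda>k. cmod (u * b k) * \<rho>^k)" using SB[of \<rho>] \<rho> u1 by (simp add: norm_mult)
    have sd: "summable (\<lambda>k. cmod (d k) * \<rho>^k)"
    proof -
      have "(\<lambda>k. cmod (d k) * \<rho>^k) = (\<lambda>k. if k = 0 then 1 else 0)" unfolding d_def by auto
      then show ?thesis using summable_single[of 0 "\<lambda>_. 1::real"] by simp
    qed
    have le: "cmod (\<Sum>k. u * b k * w^k) \<le> cmod (\<Sum>k. d k * w^k)" if w: "cmod w = \<rho>" for w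
    proof -
      have nw: "norm w < 1" "w \<noteq> 0" using w \<rho> by auto
      have "(\<Sum>k. u * b k * w^k) = u * h w" unfolding h_def
        using suminf_mult[OF bsummable[OF nw(1)], of u] by (simp add: mult.assoc)
      then have "cmod (\<Sum>k. u * b k * w^k) = cmod (H w)" unfolding H_def by simp
      also have "\<dots> \<le> 1" by (rule Hb[OF nw])
      also have "\<dots> = cmod (\<Sum>k. d k * w^k)" using dsum[of w] by (simp add: sums_iff)
      finally show ?thesis .
    qed
    have "(\<Sum>k. (cmod (u * b k))^2 * \<rho>^(2*k)) \<le> (\<Sum>k. (cmod (d k))^2 * \<rho>^(2*k))"
      by (rule bessel_dp[OF \<rho>(1) se sd le])
    also have "(\<Sum>k. (cmod (d k))^2 * \<rho>^(2*k)) = 1"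
    proof -
      have "(\<lambda>k. (cmod (d k))^2 * \<rho>^(2*k)) = (\<lambda>k. if k = 0 then 1 else 0)" unfolding d_def by auto
      then show ?thesis using sums_single[of 0 "\<lambda>_. 1::real"] by (simp add: sums_iff)
    qed
    also have "(\<Sum>k. (cmod (u * b k))^2 * \<rho>^(2*k)) = A^2 + (\<Sum>k. (\<beta> k)^2 * \<rho>^(2*k))"
    proof -
      have "(\<lambda>k. (cmod (u * b k))^2 * \<rho>^(2*k)) = (\<lambda>k. (if k = 0 then A^2 else 0) + (\<beta> k)^2 * \<rho>^(2*k))"
        unfolding \<beta>_def A_def using u1 by (auto simp: norm_mult)
      moreover have "(\<lambda>k. (if k = 0 then A^2 else 0) + (\<beta> k)^2 * \<rho>^(2*k)) sums (A^2 + (\<Sum>k. (\<beta> k)^2 * \<rho>^(2*k)))"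
        by (intro sums_add summable_sums sqb) (use \<rho> sums_single[of 0 "\<lambda>_. A^2"] in auto)
      ultimately show ?thesis by (simp add: sums_iff)
    qed
    finally show ?thesis .
  qed
  have A1: "A \<le> 1"
  proof -
    have "A^2 \<le> 1" using bes[of "1/2"] suminf_nonneg[OF sqb[of "1/2"]] by (simp add: \<beta>nn)
    then show ?thesis unfolding A_def by (simp add: power_le_one_iff abs_square_le_1)
  qed
  have A0: "0 \<le> A" unfolding A_def by simp
  have Hb': "norm (H w) \<le> 1" if "norm w < 1" for w
    using Hb[OF that] H0 A0 A1 by (cases "w = 0") auto
  have sch: "(\<Sum>k. (\<beta> k)^2 * \<rho>^(2*k)) \<le> \<rho>^2 * ((1 - A^2)^2 + A^2 * (\<Sum>k. (\<beta> k)^2 * \<rho>^(2*k)))"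
    if Alt: "A < 1" and \<rho>: "0 < \<rho>" "\<rho> < 1" for \<rho>
  proof -
    have den: "1 - of_real A * H w \<noteq> 0" if "norm w < 1" for w
    proof
      assume "1 - of_real A * H w = 0"
      then have "of_real A * H w = 1" by simp
      then have "A * norm (H w) = 1" using A0 by (metis norm_mult norm_of_real norm_one abs_of_nonneg)
      moreover have "A * norm (H w) \<le> A * 1" using Hb'[OF that] A0 by (intro mult_left_mono) auto
      ultimately show False using Alt by simp
    qed
    define \<psi> where "\<psi> = (\<lambda>w. (H w - of_real A) / (1 - of_real A * H w))"
    have \<psi>hol: "\<psi> holomorphic_on ball 0 1" unfolding \<psi>_def
      by (intro holomorphic_intros Hhol) (use den in auto)
    have \<psi>0: "\<psi> 0 = 0" unfolding \<psi>_def H0 by simp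
    have \<psi>b: "norm (\<psi> w) \<le> 1" if "norm w < 1" for w
    proof -
      have "cmod (H w - of_real A) \<le> cmod (1 - of_real A * H w)"
        by (rule blaschke_le) (use A0 A1 Hb'[OF that] in auto)
      then show ?thesis unfolding \<psi>_def using den[OF that] by (simp add: norm_divide divide_le_eq_1)
    qed
    have ptw: "cmod (H w - of_real A) \<le> \<rho> * cmod (1 - of_real A * H w)" if w: "cmod w = \<rho>" for w
    proof -
      have nw: "norm w < 1" using w \<rho> by simp
      have "norm (\<psi> w) \<le> norm w" by (rule schwarz_le[OF \<psi>hol \<psi>0 \<psi>b nw])
      moreover have "H w - of_real A = \<psi> w * (1 - of_real A * H w)" unfolding \<psi>_def using den[OF nw] by simp
      ultimately show ?thesis using w by (simp add: norm_mult mult_right_mono)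
    qed
    define d :: "nat \<Rightarrow> complex" where
      "d = (\<lambda>k. of_real \<rho> * ((if k = 0 then of_real (1 - A^2) else 0) - of_real A * e k))"
    have esum: "(\<lambda>k. e k * w^k) sums (H w - of_real A)" if "norm w < 1" for w
    proof -
      have s1: "(\<lambda>k. u * (b k * w^k)) sums (u * h w)" unfolding h_def
        by (intro sums_mult summable_sums bsummable that)
      have s2: "(\<lambda>k. if k = 0 then u * (b k * w^k) else 0) sums (u * (b 0 * w^0))"
        by (rule sums_single)
      have "(\<lambda>k. u * (b k * w^k) - (if k = 0 then u * (b k * w^k) else 0)) sums (u * h w - u * (b 0 * w^0))"
        by (rule sums_diff[OF s1 s2])
      moreover have "(\<lambda>k. u * (b k * w^k) - (if k = 0 then u * (b k * w^k) else 0)) = (\<lambda>k. e k * w^k)"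
        unfolding e_def by (auto simp: mult.assoc)
      moreover have "u * h w - u * (b 0 * w^0) = H w - of_real A" unfolding H_def using u1 by simp
      ultimately show ?thesis by simp
    qed
    have dsum: "(\<lambda>k. d k * w^k) sums (of_real \<rho> * (of_real (1 - A^2) - of_real A * (H w - of_real A)))"
      if "norm w < 1" for w
    proof -
      have "(\<lambda>k. of_real \<rho> * ((if k = 0 then of_real (1 - A^2) * w^k else 0) - of_real A * (e k * w^k)))
              sums (of_real \<rho> * (of_real (1 - A^2) * w^0 - of_real A * (H w - of_real A)))"
        by (intro sums_mult sums_diff sums_single esum that)
      moreover have "(\<lambda>k. of_real \<rho> * ((if k = 0 then of_real (1 - A^2) * w^k else 0) - of_real A * (e k * w^k)))
          = (\<lambda>k. d k * w^k)" unfolding d_def by (auto simp: algebra_simps)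
      ultimately show ?thesis by simp
    qed
    have cd: "cmod (d k) = (if k = 0 then \<rho> * (1 - A^2) else \<rho> * A * \<beta> k)" for k
    proof (cases "k = 0")
      case True
      have "1 - A^2 \<ge> 0" using A0 A1 by (simp add: power_le_one)
      moreover have "d k = of_real (\<rho> * (1 - A^2))" unfolding d_def e_def using True by simp
      then have "cmod (d k) = \<bar>\<rho> * (1 - A^2)\<bar>" by (simp only: norm_of_real)
      ultimately show ?thesis using True \<rho> by simp
    next
      case False
      then show ?thesis using \<rho> A0 unfolding d_def by (simp add: norm_mult ce[symmetric])
    qed
    have se: "summable (\<lambda>k. cmod (e k) * \<rho>^k)" unfolding ce using SBb[of \<rho>] \<rho> by simp
    have sd: "summable (\<lambda>k. cmod (d k) * \<rho>^k)"
    proof -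
      have "(\<lambda>k. cmod (d k) * \<rho>^k) = (\<lambda>k. (if k = 0 then \<rho> * (1 - A^2) else 0) + \<rho> * A * (\<beta> k * \<rho>^k))"
        unfolding cd \<beta>_def by auto
      moreover have "summable (\<lambda>k. (if k = 0 then \<rho> * (1 - A^2) else 0) + \<rho> * A * (\<beta> k * \<rho>^k))"
        by (intro summable_add summable_mult summable_single SBb) (use \<rho> in auto)
      ultimately show ?thesis by simp
    qed
    have le: "cmod (\<Sum>k. e k * w^k) \<le> cmod (\<Sum>k. d k * w^k)" if w: "cmod w = \<rho>" for w
    proof -
      have nw: "norm w < 1" using w \<rho> by simp
      have "(\<Sum>k. e k * w^k) = H w - of_real A" using esum[OF nw] by (simp add: sums_iff)
      moreover have "(\<Sum>k. d k * w^k) = of_real \<rho> * (1 - of_real A * H w)"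
        using dsum[OF nw] by (simp add: sums_iff algebra_simps power2_eq_square)
      ultimately show ?thesis using ptw[OF w] \<rho> by (simp add: norm_mult)
    qed
    have "(\<Sum>k. (cmod (e k))^2 * \<rho>^(2*k)) \<le> (\<Sum>k. (cmod (d k))^2 * \<rho>^(2*k))"
      by (rule bessel_dp[OF \<rho>(1) se sd le])
    also have "(\<Sum>k. (cmod (d k))^2 * \<rho>^(2*k)) = \<rho>^2 * ((1 - A^2)^2 + A^2 * (\<Sum>k. (\<beta> k)^2 * \<rho>^(2*k)))"
    proof -
      have "(\<lambda>k. (cmod (d k))^2 * \<rho>^(2*k)) = (\<lambda>k. (if k = 0 then \<rho>^2 * (1 - A^2)^2 else 0) + \<rho>^2 * A^2 * ((\<beta> k)^2 * \<rho>^(2*k)))"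
        unfolding cd \<beta>_def by (auto simp: power_mult_distrib)
      moreover have "(\<lambda>k. (if k = 0 then \<rho>^2 * (1 - A^2)^2 else 0) + \<rho>^2 * A^2 * ((\<beta> k)^2 * \<rho>^(2*k)))
          sums (\<rho>^2 * (1 - A^2)^2 + \<rho>^2 * A^2 * (\<Sum>k. (\<beta> k)^2 * \<rho>^(2*k)))"
        by (intro sums_add sums_mult summable_sums sqb) (use \<rho> sums_single[of 0 "\<lambda>_. \<rho>^2 * (1 - A^2)^2"] in auto)
      ultimately show ?thesis by (simp add: sums_iff algebra_simps)
    qed
    finally show ?thesis unfolding ce .
  qed
  define X where "X = R^p"
  define Y where "Y = R^(p-1)"
  have X0: "0 < X" "X < 1" unfolding X_def using R p by (auto simp: power_less_one_iff)
  have X3: "X = R * Y" unfolding X_def Y_def by (rule pow_split[OF p])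
  note X = X0 X3
  have Y: "Y \<le> 1" unfolding Y_def using R by (simp add: power_le_one)
  have eq: "- 6 * Y + Y^2 + 8 * X^2 + 1 = 0" using R(3) unfolding poly_xy[OF p] X_def Y_def .
  have fin: "R * (A + (\<Sum>k. \<beta> k * X^k)) \<le> 1"
    by (rule final_real[OF _ \<beta>nn SBb A0 A1 bes sch R(1,2) X Y eq]) (simp add: \<beta>_def)
  have "(\<lambda>k. cmod (b k) * X^k) sums (A + (\<Sum>k. \<beta> k * X^k))"
  proof -
    have "(\<lambda>k. cmod (b k) * X^k) = (\<lambda>k. (if k = 0 then A else 0) + \<beta> k * X^k)"
      unfolding \<beta>_def A_def by auto
    moreover have "(\<lambda>k. (if k = 0 then A else 0) + \<beta> k * X^k) sums (A + (\<Sum>k. \<beta> k * X^k))"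
      by (intro sums_add summable_sums SBb) (use X sums_single[of 0 "\<lambda>_. A"] in auto)
    ultimately show ?thesis by simp
  qed
  then have "(\<lambda>k. R * (cmod (b k) * X^k)) sums (R * (A + (\<Sum>k. \<beta> k * X^k)))" by (rule sums_mult)
  moreover have "(\<lambda>k. R * (cmod (b k) * X^k)) = (\<lambda>k. cmod (a (p * k + 1)) * R^(p * k + 1))"
  proof -
    have pc: "\<And>k. (R^k)^p = (R^p)^k" by (simp add: power_mult[symmetric] mult.commute)
    show ?thesis unfolding b_def X_def by (auto simp: power_add power_mult mult_ac pc)
  qed
  ultimately have "(\<lambda>k. cmod (a (p * k + 1)) * R^(p * k + 1)) sums (R * (A + (\<Sum>k. \<beta> k * X^k)))" by simp
  moreover have zero: "\<forall>n. \<not> (n \<ge> 1 \<and> p dvd (n - 1)) \<longrightarrow> cmod (a n) * R^n = 0" using azero by simp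
  ultimately have "(\<lambda>n. cmod (a n) * R^n) sums (R * (A + (\<Sum>k. \<beta> k * X^k)))"
    using reindex_bwd[of "\<lambda>n. cmod (a n) * R^n" p] p by blast
  then have "majorant a R = R * (A + (\<Sum>k. \<beta> k * X^k))" unfolding majorant_def by (simp add: sums_iff)
  then show ?thesis using fin by simp
qed

theorem theorem1:
  fixes p :: nat
  assumes "p \<ge> 1"
  shows "(\<forall>(f :: complex \<Rightarrow> complex) (a :: nat \<Rightarrow> complex).
            f holomorphic_on ball 0 1 \<longrightarrow>
            (\<forall>z\<in>ball 0 1. (\<lambda>n. a n * z ^ n) sums f z) \<longrightarrow>
            p_symmetric_coeffs p a \<longrightarrow>
            (\<forall>z\<in>ball 0 1. norm (f z) \<le> 1) \<longrightarrow>
            (\<forall>r. 0 \<le> r \<and> r \<le> bohr_radius p \<longrightarrow> majorant a r \<le> 1))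
       \<and> (let rp = bohr_radius p;
              \<alpha> = (1 - sqrt (1 - rp ^ (2 * p)) / sqrt 2) / rp ^ p;
              g = (\<lambda>z::complex. z * (z ^ p - complex_of_real \<alpha>) / (1 - complex_of_real \<alpha> * z ^ p))
          in \<exists>c :: nat \<Rightarrow> complex.
               (\<forall>z\<in>ball 0 1. (\<lambda>n. c n * z ^ n) sums g z) \<and>
               p_symmetric_coeffs p c \<and>
               (\<forall>z\<in>ball 0 1. norm (g z) \<le> 1) \<and>
               majorant c rp \<le> 1 \<and>
               (\<forall>r. rp < r \<and> r < 1 \<longrightarrow> majorant c r > 1))"
proof -
  have rp: "0 < bohr_radius p" "bohr_radius p < 1" "bohr_poly p (bohr_radius p) = 0" "bohr_radius p ^ p > 1/3"
    using bohr_root[OF assms] by auto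
  show ?thesis
  proof (rule conjI)
    show "\<forall>(f :: complex \<Rightarrow> complex) (a :: nat \<Rightarrow> complex).
            f holomorphic_on ball 0 1 \<longrightarrow>
            (\<forall>z\<in>ball 0 1. (\<lambda>n. a n * z ^ n) sums f z) \<longrightarrow>
            p_symmetric_coeffs p a \<longrightarrow>
            (\<forall>z\<in>ball 0 1. norm (f z) \<le> 1) \<longrightarrow>
            (\<forall>r. 0 \<le> r \<and> r \<le> bohr_radius p \<longrightarrow> majorant a r \<le> 1)"
    proof (intro allI impI)
      fix f :: "complex \<Rightarrow> complex" and a :: "nat \<Rightarrow> complex" and r :: real
      assume holf: "f holomorphic_on ball 0 1" and sm: "\<forall>z\<in>ball 0 1. (\<lambda>n. a n * z ^ n) sums f z"
        and sym: "p_symmetric_coeffs p a" and bd: "\<forall>z\<in>ball 0 1. norm (f z) \<le> 1"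
        and r: "0 \<le> r \<and> r \<le> bohr_radius p"
      define R where "R = bohr_radius p"
      have R: "0 < R" "R < 1" "bohr_poly p R = 0" using rp unfolding R_def by auto
      have M: "majorant a R \<le> 1" by (rule main_analytic[OF assms holf sm sym bd R])
      have sR: "summable (\<lambda>n. cmod (a n) * R^n)"
      proof -
        define R' where "R' = (1 + R) / 2"
        have r': "0 \<le> R'" "R' < 1" "R < R'" unfolding R'_def using R by auto
        have "complex_of_real R' \<in> ball 0 1" using r' by simp
        then have "(\<lambda>n. a n * complex_of_real R' ^ n) sums f (complex_of_real R')" using sm by blast
        then have "summable (\<lambda>n. a n * complex_of_real R' ^ n)" by (rule sums_summable)
        then have "summable (\<lambda>n. norm (a n * complex_of_real R ^ n))"
          by (rule powser_insidea) (use R r' in auto)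
        then show ?thesis using R by (simp add: norm_mult norm_power)
      qed
      have le: "cmod (a n) * r^n \<le> cmod (a n) * R^n" for n
        using r unfolding R_def by (intro mult_left_mono power_mono) auto
      have sr: "summable (\<lambda>n. cmod (a n) * r^n)"
        by (rule summable_comparison_test'[OF sR]) (use r le in auto)
      have "majorant a r \<le> majorant a R" unfolding majorant_def by (rule suminf_le[OF le sr sR])
      then show "majorant a r \<le> 1" using M by simp
    qed
  next
    show "let rp = bohr_radius p;
              \<alpha> = (1 - sqrt (1 - rp ^ (2 * p)) / sqrt 2) / rp ^ p;
              g = (\<lambda>z::complex. z * (z ^ p - complex_of_real \<alpha>) / (1 - complex_of_real \<alpha> * z ^ p))
          in \<exists>c :: nat \<Rightarrow> complex.
               (\<forall>z\<in>ball 0 1. (\<lambda>n. c n * z ^ n) sums g z) \<and>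
               p_symmetric_coeffs p c \<and>
               (\<forall>z\<in>ball 0 1. norm (g z) \<le> 1) \<and>
               majorant c rp \<le> 1 \<and>
               (\<forall>r. rp < r \<and> r < 1 \<longrightarrow> majorant c r > 1)"
      unfolding Let_def by (rule extremal[OF assms rp]) (rule refl)
  qed
qed

end
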